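(* Let $\alpha=\sqrt{a_{ij}y^iy^j}$ be a Riemannian metric and $\beta=b_iy^i$ a $1$-form on a manifold, $b=\|\beta\|_\alpha$, satisfying ${}^\alpha R^i{}_j=\mu(\alpha^2\delta^i{}_j-y^iy_j)$ and $b_{i|j}=c(x)a_{ij}$ with $c^2=\kappa-\mu b^2$, where $\kappa\neq0$, $\mu\neq 0$ are constants and $\kappa-\mu b^2>0$. Define $$\bar\alpha^2=\frac{|\mu|}{\kappa-\mu b^2}\left(\alpha^2+\frac{\mu}{\kappa-\mu b^2}\beta^2\right),\qquad \bar\beta=\frac{|\mu|^{3/2}}{(\kappa-\mu b^2)^{3/2}}\beta .$$ Then ${}^{\bar\alpha}R^i{}_j=0$ and $\bar b_{i|j}=\pm\sqrt{|\mu|}\,\bar a_{ij}$. Moreover, $(\kappa-\mu b^2)(\kappa^{-1}+\mu^{-1}\bar b^2)=1$, and $$\alpha^2=\frac{|\mu|^{-1}}{\kappa^{-1}+\mu^{-1}\bar b^2}\left(\bar\alpha^2-\frac{\mu^{-1}}{\kappa^{-1}+\mu^{-1}\bar b^2}\bar\beta^2\right),\qquad \beta=\frac{|\mu|^{-3/2}}{(\kappa^{-1}+\mu^{-1}\bar b^2)^{3/2}}\bar\beta .$$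
   Context: ${}^\alpha R^i{}_j$ denotes the Riemann curvature tensor of $\alpha$, $y_j=a_{jk}y^k$, $b_{i|j}$ the covariant derivative of $\beta$ with respect to $\alpha$. For $\bar\alpha^2=\bar a_{ij}y^iy^j$ (a quadratic form, possibly indefinite when $\kappa<0$) and $\bar\beta=\bar b_iy^i$, ${}^{\bar\alpha}R^i{}_j$ is the Riemann curvature tensor of $\bar\alpha$, $\bar b_{i|j}$ the covariant derivative of $\bar\beta$ with respect to $\bar\alpha$, and $\bar b^2=\bar a^{ij}\bar b_i\bar b_j$. *)

theory Defs
  imports "HOL-Analysis.Analysis"
begin

text \<open>Local coordinate formulation: the manifold is represented by a chart,
an open set U of real^'n (coordinates x^1..x^n); tangent vectors y are in real^'n.\<close>

definition pd :: "(real^'n \<Rightarrow> real) \<Rightarrow> 'n \<Rightarrow> real^'n \<Rightarrow> real" where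
  "pd f k x = deriv (\<lambda>t. f (x + t *\<^sub>R axis k 1)) 0"

fun Ck :: "nat \<Rightarrow> (real^'n) set \<Rightarrow> (real^'n \<Rightarrow> real) \<Rightarrow> bool" where
  "Ck 0 U f = continuous_on U f"
| "Ck (Suc k) U f = (f differentiable_on U \<and> (\<forall>i. Ck k U (pd f i)))"

definition smooth_fun_on :: "(real^'n) set \<Rightarrow> (real^'n \<Rightarrow> real) \<Rightarrow> bool" where
  "smooth_fun_on U f = (\<forall>k. Ck k U f)"

definition christoffel :: "(real^'n \<Rightarrow> real^'n^'n) \<Rightarrow> 'n \<Rightarrow> 'n \<Rightarrow> 'n \<Rightarrow> real^'n \<Rightarrow> real" where
  "christoffel g k i j x = (1/2) * (\<Sum>l\<in>UNIV. matrix_inv (g x) $ k $ l *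
      (pd (\<lambda>z. g z $ l $ j) i x + pd (\<lambda>z. g z $ l $ i) j x - pd (\<lambda>z. g z $ i $ j) l x))"

text \<open>Riemann curvature R^i_k(x,y) of the quadratic form g_{ij}(x) y^i y^j, i.e. the
Riemann curvature of its spray G^i = 1/2 Gamma^i_{jl} y^j y^l:
R^i_k = y^j y^l (d_k Gamma^i_{jl} - d_j Gamma^i_{kl} + Gamma^m_{jl} Gamma^i_{mk} - Gamma^i_{jm} Gamma^m_{kl}).
Entry (i,k) of the result is R^i_k.\<close>
definition riem :: "(real^'n \<Rightarrow> real^'n^'n) \<Rightarrow> real^'n \<Rightarrow> real^'n \<Rightarrow> real^'n^'n" where
  "riem g x y = (\<chi> i k. \<Sum>j\<in>UNIV. \<Sum>l\<in>UNIV. y $ j * y $ l *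
      (pd (\<lambda>z. christoffel g i j l z) k x - pd (\<lambda>z. christoffel g i k l z) j x
       + (\<Sum>m\<in>UNIV. christoffel g m j l x * christoffel g i m k x
                     - christoffel g i j m x * christoffel g m k l x)))"

definition covd :: "(real^'n \<Rightarrow> real^'n^'n) \<Rightarrow> (real^'n \<Rightarrow> real^'n) \<Rightarrow> real^'n \<Rightarrow> 'n \<Rightarrow> 'n \<Rightarrow> real" where
  "covd g b x i j = pd (\<lambda>z. b z $ i) j x - (\<Sum>k\<in>UNIV. christoffel g k i j x * b x $ k)"

definition quadf :: "(real^'n \<Rightarrow> real^'n^'n) \<Rightarrow> real^'n \<Rightarrow> real^'n \<Rightarrow> real" where
  "quadf g x y = (\<Sum>i\<in>UNIV. \<Sum>j\<in>UNIV. g x $ i $ j * y $ i * y $ j)"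

definition oneform :: "(real^'n \<Rightarrow> real^'n) \<Rightarrow> real^'n \<Rightarrow> real^'n \<Rightarrow> real" where
  "oneform b x y = (\<Sum>i\<in>UNIV. b x $ i * y $ i)"

definition lower :: "(real^'n \<Rightarrow> real^'n^'n) \<Rightarrow> real^'n \<Rightarrow> real^'n \<Rightarrow> 'n \<Rightarrow> real" where
  "lower g x y j = (\<Sum>k\<in>UNIV. g x $ j $ k * y $ k)"

definition bnorm2 :: "(real^'n \<Rightarrow> real^'n^'n) \<Rightarrow> (real^'n \<Rightarrow> real^'n) \<Rightarrow> real^'n \<Rightarrow> real" where
  "bnorm2 g b x = (\<Sum>i\<in>UNIV. \<Sum>j\<in>UNIV. matrix_inv (g x) $ i $ j * b x $ i * b x $ j)"

definition abar :: "real \<Rightarrow> real \<Rightarrow> (real^'n \<Rightarrow> real^'n^'n) \<Rightarrow> (real^'n \<Rightarrow> real^'n) \<Rightarrow> real^'n \<Rightarrow> real^'n^'n" where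
  "abar \<kappa> \<mu> a b x = (let D = \<kappa> - \<mu> * bnorm2 a b x in
      (\<chi> i j. (\<bar>\<mu>\<bar> / D) * (a x $ i $ j + (\<mu> / D) * (b x $ i * b x $ j))))"

definition bbar :: "real \<Rightarrow> real \<Rightarrow> (real^'n \<Rightarrow> real^'n^'n) \<Rightarrow> (real^'n \<Rightarrow> real^'n) \<Rightarrow> real^'n \<Rightarrow> real^'n" where
  "bbar \<kappa> \<mu> a b x = (let D = \<kappa> - \<mu> * bnorm2 a b x in
      (\<bar>\<mu>\<bar> powr (3/2) / D powr (3/2)) *\<^sub>R b x)"

end

theory Submission
  imports Defs
begin


lemma pd_has_DERIV:
  fixes f :: "real^'n \<Rightarrow> real"
  assumes "(f has_derivative f') (at x)"
  shows "((\<lambda>t. f (x + t *\<^sub>R axis k 1)) has_real_derivative f' (axis k 1)) (at 0)"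
proof -
  have l: "linear f'" using assms has_derivative_linear by blast
  have g: "((\<lambda>t::real. x + t *\<^sub>R axis k (1::real)) has_derivative (\<lambda>t. t *\<^sub>R axis k 1)) (at 0)"
    by (auto intro!: derivative_eq_intros)
  have "((\<lambda>t. f (x + t *\<^sub>R axis k 1)) has_derivative (\<lambda>t. f' (t *\<^sub>R axis k 1))) (at 0)"
    using has_derivative_compose[OF g, of f f'] assms by simp
  moreover have "(\<lambda>t. f' (t *\<^sub>R axis k 1)) = (\<lambda>t. t * f' (axis k 1))"
    using linear_scale[OF l] by auto
  ultimately show ?thesis
    by (simp add: has_field_derivative_def, metis (no_types, lifting) ext mult.commute)
qed

lemma pd_has:
  fixes f :: "real^'n \<Rightarrow> real"
  assumes "(f has_derivative f') (at x)"
  shows "pd f k x = f' (axis k 1)"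
  unfolding pd_def using pd_has_DERIV[OF assms] DERIV_imp_deriv by blast

lemma pd_DERIV:
  fixes f :: "real^'n \<Rightarrow> real"
  assumes "f differentiable (at x)"
  shows "((\<lambda>t. f (x + t *\<^sub>R axis k 1)) has_real_derivative pd f k x) (at 0)"
  using assms pd_has pd_has_DERIV unfolding differentiable_def by metis

lemma pd_eqI:
  fixes f :: "real^'n \<Rightarrow> real"
  assumes "((\<lambda>t. f (x + t *\<^sub>R axis k 1)) has_real_derivative D) (at 0)"
  shows "pd f k x = D"
  unfolding pd_def using assms DERIV_imp_deriv by blast

lemma pd_add:
  fixes f g :: "real^'n \<Rightarrow> real"
  assumes "f differentiable (at x)" "g differentiable (at x)"
  shows "pd (\<lambda>z. f z + g z) k x = pd f k x + pd g k x"
  by (rule pd_eqI) (intro DERIV_add pd_DERIV assms)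

lemma pd_diff:
  fixes f g :: "real^'n \<Rightarrow> real"
  assumes "f differentiable (at x)" "g differentiable (at x)"
  shows "pd (\<lambda>z. f z - g z) k x = pd f k x - pd g k x"
  by (rule pd_eqI) (intro DERIV_diff pd_DERIV assms)

lemma pd_mult:
  fixes f g :: "real^'n \<Rightarrow> real"
  assumes "f differentiable (at x)" "g differentiable (at x)"
  shows "pd (\<lambda>z. f z * g z) k x = pd f k x * g x + f x * pd g k x"
proof (rule pd_eqI)
  have h: "((\<lambda>t. f (x + t *\<^sub>R axis k 1) * g (x + t *\<^sub>R axis k 1)) has_real_derivative
       pd f k x * g (x + 0 *\<^sub>R axis k 1) + pd g k x * f (x + 0 *\<^sub>R axis k 1)) (at 0)"
    by (rule DERIV_mult[OF pd_DERIV[OF assms(1)] pd_DERIV[OF assms(2)]])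
  then show "((\<lambda>t. f (x + t *\<^sub>R axis k 1) * g (x + t *\<^sub>R axis k 1)) has_real_derivative
       pd f k x * g x + f x * pd g k x) (at 0)" by (simp add: mult.commute)
qed

lemma pd_const: "pd (\<lambda>z. c) k x = 0"
  by (rule pd_eqI) simp

lemma pd_cmult:
  fixes f :: "real^'n \<Rightarrow> real"
  assumes "f differentiable (at x)"
  shows "pd (\<lambda>z. c * f z) k x = c * pd f k x"
  by (rule pd_eqI) (intro DERIV_cmult pd_DERIV assms)

lemma pd_sum:
  fixes f :: "'i \<Rightarrow> real^'n \<Rightarrow> real"
  assumes "finite I" "\<And>i. i \<in> I \<Longrightarrow> f i differentiable (at x)"
  shows "pd (\<lambda>z. \<Sum>i\<in>I. f i z) k x = (\<Sum>i\<in>I. pd (f i) k x)"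
  by (rule pd_eqI) (intro DERIV_sum pd_DERIV assms)

lemma pd_divide:
  fixes f g :: "real^'n \<Rightarrow> real"
  assumes "f differentiable (at x)" "g differentiable (at x)" "g x \<noteq> 0"
  shows "pd (\<lambda>z. f z / g z) k x = (pd f k x * g x - f x * pd g k x) / (g x)^2"
proof (rule pd_eqI)
  have h: "((\<lambda>t. f (x + t *\<^sub>R axis k 1) / g (x + t *\<^sub>R axis k 1)) has_real_derivative
       (pd f k x * g (x + 0 *\<^sub>R axis k 1) - f (x + 0 *\<^sub>R axis k 1) * pd g k x) / (g (x + 0 *\<^sub>R axis k 1) * g (x + 0 *\<^sub>R axis k 1))) (at 0)"
    by (rule DERIV_divide[OF pd_DERIV[OF assms(1)] pd_DERIV[OF assms(2)]]) (use assms(3) in simp)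
  then show "((\<lambda>t. f (x + t *\<^sub>R axis k 1) / g (x + t *\<^sub>R axis k 1)) has_real_derivative
       (pd f k x * g x - f x * pd g k x) / (g x)^2) (at 0)" by (simp add: power2_eq_square)
qed

lemma pd_powr:
  fixes f :: "real^'n \<Rightarrow> real"
  assumes "f differentiable (at x)" "f x > 0"
  shows "pd (\<lambda>z. f z powr r) k x = r * f x powr (r - 1) * pd f k x"
proof (rule pd_eqI)
  show "((\<lambda>t. f (x + t *\<^sub>R axis k 1) powr r) has_real_derivative r * f x powr (r - 1) * pd f k x) (at 0)"
    using DERIV_powr[OF pd_DERIV[OF assms(1)], where f="\<lambda>_. r" and r=0] assms(2)
    by (simp add: powr_diff field_simps)
qed

lemma pd_cong:
  fixes f g :: "real^'n \<Rightarrow> real"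
  assumes "open U" "x \<in> U" "\<And>z. z \<in> U \<Longrightarrow> f z = g z"
  shows "pd f k x = pd g k x"
proof -
  have o: "open ((\<lambda>t::real. x + t *\<^sub>R axis k (1::real)) -` U)"
    by (rule open_vimage[OF assms(1)]) (intro continuous_intros)
  have "\<forall>\<^sub>F t in nhds 0. t \<in> (\<lambda>t::real. x + t *\<^sub>R axis k (1::real)) -` U"
    by (rule eventually_nhds_in_open[OF o]) (simp add: assms(2))
  then have "\<forall>\<^sub>F t in nhds 0. x + t *\<^sub>R axis k 1 \<in> U" by simp
  then have "\<forall>\<^sub>F t in nhds 0. f (x + t *\<^sub>R axis k 1) = g (x + t *\<^sub>R axis k 1)"
    by eventually_elim (use assms(3) in auto)
  then show ?thesis unfolding pd_def by (intro deriv_cong_ev) auto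
qed




lemma differentiable_prod':
  fixes f :: "'i \<Rightarrow> 'a::real_normed_vector \<Rightarrow> real"
  assumes "finite I" "\<And>i. i \<in> I \<Longrightarrow> f i differentiable (at x within s)"
  shows "(\<lambda>z. \<Prod>i\<in>I. f i z) differentiable (at x within s)"
  using assms by (induction I rule: finite_induct) (auto intro!: differentiable_mult)

lemma det_differentiable:
  fixes M :: "'a::real_normed_vector \<Rightarrow> real^'n^'n"
  assumes "\<And>i j. (\<lambda>z. M z $ i $ j) differentiable (at x within s)"
  shows "(\<lambda>z. det (M z)) differentiable (at x within s)"
  unfolding det_def
  by (intro differentiable_sum differentiable_mult differentiable_const differentiable_prod' ballI)
     (auto simp: finite_permutations assms)

lemma minv_props:
  fixes M :: "real^'n^'n"
  assumes "invertible M"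
  shows "M ** matrix_inv M = mat 1" "matrix_inv M ** M = mat 1"
proof -
  have "\<exists>A'. M ** A' = mat 1 \<and> A' ** M = mat 1" using assms unfolding invertible_def by blast
  then have "M ** matrix_inv M = mat 1 \<and> matrix_inv M ** M = mat 1"
    unfolding matrix_inv_def by (rule someI_ex)
  then show "M ** matrix_inv M = mat 1" "matrix_inv M ** M = mat 1" by auto
qed

lemma minv_unique:
  fixes M N :: "real^'n^'n"
  assumes "M ** N = mat 1"
  shows "matrix_inv M = N"
proof -
  have NM: "N ** M = mat 1" using assms matrix_left_right_inverse by blast
  then have inv: "invertible M" unfolding invertible_def using assms by blast
  have "matrix_inv M = matrix_inv M ** (M ** N)" by (simp add: assms)
  also have "\<dots> = (matrix_inv M ** M) ** N" by (simp add: matrix_mul_assoc)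
  also have "\<dots> = N" using minv_props(2)[OF inv] by simp
  finally show ?thesis .
qed

lemma minv_cramer:
  fixes M :: "real^'n^'n"
  assumes "det M \<noteq> 0"
  shows "matrix_inv M $ i $ j = det (\<chi> p q. if q = i then axis j 1 $ p else M $ p $ q) / det M"
proof -
  have inv: "invertible M" using assms invertible_det_nz by blast
  have "M *v (matrix_inv M *v axis j 1) = axis j 1"
    using minv_props(1)[OF inv] by (simp add: matrix_vector_mul_assoc)
  then have "matrix_inv M *v axis j 1 = (\<chi> k. det(\<chi> p q. if q=k then axis j 1 $ p else M $ p $ q) / det M)"
    using cramer[OF assms] by blast
  then have "(matrix_inv M *v axis j 1) $ i = det (\<chi> p q. if q = i then axis j 1 $ p else M $ p $ q) / det M"
    by simp
  then show ?thesis by (simp add: matrix_vector_mult_basis column_def)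
qed

lemma mat_mult_entry: "((A::real^'n^'n) ** B) $ i $ j = (\<Sum>k\<in>UNIV. A $ i $ k * B $ k $ j)"
  by (simp add: matrix_matrix_mult_def)

lemma mat1_entry: "(mat 1 :: real^'n^'n) $ i $ j = (if i = j then 1 else 0)"
  by (simp add: mat_def)




lemma diff_cong_open:
  fixes f g :: "'a::real_normed_vector \<Rightarrow> 'b::real_normed_vector"
  assumes "f differentiable (at x)" "open U" "x \<in> U" "\<And>z. z \<in> U \<Longrightarrow> f z = g z"
  shows "g differentiable (at x)"
  using assms has_derivative_transform_within_open unfolding differentiable_def by blast

lemma smooth_C2:
  assumes "smooth_fun_on U f" "open U" "x \<in> U"
  shows "f differentiable (at x)" "(pd f i) differentiable (at x)"
proof -
  have "Ck 2 U f" using assms(1) unfolding smooth_fun_on_def by blast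
  then have "f differentiable_on U" "pd f i differentiable_on U"
    by (auto simp: numeral_2_eq_2)
  then show "f differentiable (at x)" "(pd f i) differentiable (at x)"
    using assms(2,3) differentiable_on_eq_differentiable_at by blast+
qed

lemma det_col_diff:
  fixes M :: "real^'m \<Rightarrow> real^'n^'n"
  assumes "\<And>p q. (\<lambda>w. M w $ p $ q) differentiable (at z)"
  shows "(\<lambda>w. det (\<chi> p q. if q = i then v $ p else M w $ p $ q)) differentiable (at z)"
proof -
  have "\<And>p q. (\<lambda>w. (\<chi> p q. if q = i then v $ p else M w $ p $ q) $ p $ q) differentiable (at z)"
    using assms by (case_tac "q = i") simp_all
  then show ?thesis by (rule det_differentiable)
qed

locale L =
  fixes U :: "(real^'n) set"
    and a :: "real^'n \<Rightarrow> real^'n^'n"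
    and b :: "real^'n \<Rightarrow> real^'n"
    and c :: "real^'n \<Rightarrow> real"
    and \<kappa> \<mu> :: real
  assumes U_open: "open U"
    and a_smooth: "\<forall>i j. smooth_fun_on U (\<lambda>x. a x $ i $ j)"
    and a_sym: "\<forall>x\<in>U. transpose (a x) = a x"
    and a_posdef: "\<forall>x\<in>U. \<forall>y. y \<noteq> 0 \<longrightarrow> quadf a x y > 0"
    and b_smooth: "\<forall>i. smooth_fun_on U (\<lambda>x. b x $ i)"
    and curv: "\<forall>x\<in>U. \<forall>y. \<forall>i j. riem a x y $ i $ j
                 = \<mu> * (quadf a x y * (if i = j then 1 else 0) - y $ i * lower a x y j)"
    and closed: "\<forall>x\<in>U. \<forall>i j. covd a b x i j = c x * a x $ i $ j"
    and c_sq: "\<forall>x\<in>U. (c x)\<^sup>2 = \<kappa> - \<mu> * bnorm2 a b x"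
    and kappa_nz: "\<kappa> \<noteq> 0"
    and mu_nz: "\<mu> \<noteq> 0"
    and pos: "\<forall>x\<in>U. \<kappa> - \<mu> * bnorm2 a b x > 0"
begin

definition "A z = matrix_inv (a z)"
definition "D z = \<kappa> - \<mu> * bnorm2 a b z"

lemma asym: "z \<in> U \<Longrightarrow> a z $ i $ j = a z $ j $ i"
proof -
  assume z: "z \<in> U"
  have "transpose (a z) $ i $ j = a z $ j $ i" by (simp add: transpose_def)
  then show ?thesis using a_sym z by simp
qed

lemma a_diff: "z \<in> U \<Longrightarrow> (\<lambda>w. a w $ i $ j) differentiable (at z)"
  using smooth_C2(1)[OF _ U_open, of "\<lambda>w. a w $ i $ j" z] a_smooth by simp
lemma a_diff2: "z \<in> U \<Longrightarrow> pd (\<lambda>w. a w $ i $ j) k differentiable (at z)"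
  using smooth_C2(2)[OF _ U_open, of "\<lambda>w. a w $ i $ j" z] a_smooth by simp
lemma b_diff: "z \<in> U \<Longrightarrow> (\<lambda>w. b w $ i) differentiable (at z)"
  using smooth_C2(1)[OF _ U_open, of "\<lambda>w. b w $ i" z] b_smooth by simp
lemma b_diff2: "z \<in> U \<Longrightarrow> pd (\<lambda>w. b w $ i) k differentiable (at z)"
  using smooth_C2(2)[OF _ U_open, of "\<lambda>w. b w $ i" z] b_smooth by simp

lemma a_inv: "z \<in> U \<Longrightarrow> invertible (a z)"
proof -
  assume z: "z \<in> U"
  have "\<forall>y. a z *v y = 0 \<longrightarrow> y = 0"
  proof (intro allI impI, rule ccontr)
    fix y assume h: "a z *v y = 0" "y \<noteq> 0"
    have "quadf a z y = (\<Sum>i\<in>UNIV. y $ i * (a z *v y) $ i)"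
      unfolding quadf_def matrix_vector_mult_def
      by (auto simp: sum_distrib_left mult_ac intro!: sum.cong)
    also have "\<dots> = 0" using h by simp
    finally show False using a_posdef z h by force
  qed
  then obtain B where "B ** a z = mat 1" using matrix_left_invertible_ker by blast
  then show "invertible (a z)" unfolding invertible_def using matrix_left_right_inverse by blast
qed

lemma det_nz: "z \<in> U \<Longrightarrow> det (a z) \<noteq> 0"
  using a_inv invertible_det_nz by blast

lemma aA: "z \<in> U \<Longrightarrow> (\<Sum>k\<in>UNIV. a z $ i $ k * A z $ k $ j) = (if i = j then 1 else 0)"
proof -
  assume z: "z \<in> U"
  have "(a z ** A z) $ i $ j = mat 1 $ i $ j" using minv_props(1)[OF a_inv[OF z]] unfolding A_def by simp
  then show ?thesis unfolding mat_mult_entry mat1_entry .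
qed

lemma Aa: "z \<in> U \<Longrightarrow> (\<Sum>k\<in>UNIV. A z $ i $ k * a z $ k $ j) = (if i = j then 1 else 0)"
proof -
  assume z: "z \<in> U"
  have "(A z ** a z) $ i $ j = mat 1 $ i $ j" using minv_props(2)[OF a_inv[OF z]] unfolding A_def by simp
  then show ?thesis unfolding mat_mult_entry mat1_entry .
qed

lemma Asym: "z \<in> U \<Longrightarrow> A z $ i $ j = A z $ j $ i"
proof -
  assume z: "z \<in> U"
  have "transpose (A z) ** a z = mat 1"
  proof -
    have "transpose (a z ** A z) = mat 1" using minv_props(1)[OF a_inv[OF z]] unfolding A_def
      by (simp add: transpose_mat)
    then show ?thesis using a_sym z by (simp add: matrix_transpose_mul)
  qed
  then have "a z ** transpose (A z) = mat 1" using matrix_left_right_inverse by blast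
  then have "A z = transpose (A z)" unfolding A_def by (rule minv_unique)
  then have "A z $ i $ j = transpose (A z) $ i $ j" by simp
  then show ?thesis by (simp add: transpose_def)
qed

lemma A_diff: "z \<in> U \<Longrightarrow> (\<lambda>w. A w $ i $ j) differentiable (at z)"
proof -
  assume z: "z \<in> U"
  have num: "(\<lambda>w. det (\<chi> p q. if q = i then axis j 1 $ p else a w $ p $ q)) differentiable (at z)"
    by (rule det_col_diff) (rule a_diff[OF z])
  have den: "(\<lambda>w. det (a w)) differentiable (at z)"
    by (rule det_differentiable) (rule a_diff[OF z])
  have "(\<lambda>w. det (\<chi> p q. if q = i then axis j 1 $ p else a w $ p $ q) / det (a w)) differentiable (at z)"
    by (rule differentiable_divide[OF num den det_nz[OF z]])
  then show ?thesis
  proof (rule diff_cong_open[OF _ U_open z])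
    fix w assume "w \<in> U"
    then show "det (\<chi> p q. if q = i then axis j 1 $ p else a w $ p $ q) / det (a w) = A w $ i $ j"
      unfolding A_def by (rule minv_cramer[OF det_nz, symmetric])
  qed
qed

end



lemma if10_mult: "(if P then 1 else 0) * (x::real) = (if P then x else 0)"
  and mult_if10: "x * (if P then 1 else 0) = (if P then x else (0::real))"
  by auto

lemma contract2:
  fixes x :: "'i \<Rightarrow> real" and y :: "'i \<Rightarrow> 'j \<Rightarrow> real"
  assumes "finite I" "finite J"
  shows "(\<Sum>m\<in>I. x m * (\<Sum>p\<in>J. y m p * X p)) = (\<Sum>p\<in>J. (\<Sum>m\<in>I. x m * y m p) * X p)"
proof -
  have "(\<Sum>m\<in>I. x m * (\<Sum>p\<in>J. y m p * X p)) = (\<Sum>m\<in>I. \<Sum>p\<in>J. x m * y m p * X p)"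
    by (simp add: sum_distrib_left mult.assoc)
  also have "\<dots> = (\<Sum>p\<in>J. \<Sum>m\<in>I. x m * y m p * X p)" by (rule sum.swap)
  also have "\<dots> = (\<Sum>p\<in>J. (\<Sum>m\<in>I. x m * y m p) * X p)"
    by (simp add: sum_distrib_right)
  finally show ?thesis .
qed

lemma swap2:
  fixes f :: "'i \<Rightarrow> real" and g :: "'j \<Rightarrow> real"
  assumes "finite I" "finite J"
  shows "(\<Sum>p\<in>I. f p * (\<Sum>m\<in>J. g m * X p m)) = (\<Sum>m\<in>J. g m * (\<Sum>p\<in>I. f p * X p m))"
proof -
  have "(\<Sum>p\<in>I. f p * (\<Sum>m\<in>J. g m * X p m)) = (\<Sum>p\<in>I. \<Sum>m\<in>J. g m * (f p * X p m))"
    by (simp add: sum_distrib_left mult_ac)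
  also have "\<dots> = (\<Sum>m\<in>J. \<Sum>p\<in>I. g m * (f p * X p m))" by (rule sum.swap)
  also have "\<dots> = (\<Sum>m\<in>J. g m * (\<Sum>p\<in>I. f p * X p m))"
    by (simp add: sum_distrib_left)
  finally show ?thesis .
qed

context L begin

definition "da i j k z = pd (\<lambda>w. a w $ i $ j) k z"
definition "G k i j z = christoffel a k i j z"

lemma da_sym: "z \<in> U \<Longrightarrow> da i j k z = da j i k z"
  unfolding da_def by (rule pd_cong[OF U_open]) (auto intro: asym)

lemma GL: "z \<in> U \<Longrightarrow> (\<Sum>m\<in>UNIV. a z $ l $ m * G m i j z) = (1/2) * (da l j i z + da l i j z - da i j l z)"
proof -
  assume z: "z \<in> U"
  have "(\<Sum>m\<in>UNIV. a z $ l $ m * G m i j z)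
     = (1/2) * (\<Sum>p\<in>UNIV. (\<Sum>m\<in>UNIV. a z $ l $ m * A z $ m $ p) * (da p j i z + da p i j z - da i j p z))"
    unfolding G_def christoffel_def A_def[symmetric] da_def[symmetric]
    by (simp add: contract2[symmetric] sum_distrib_left mult_ac)
  also have "\<dots> = (1/2) * (da l j i z + da l i j z - da i j l z)"
    by (simp add: aA[OF z] if10_mult)
  finally show ?thesis .
qed

lemma G_sym: "z \<in> U \<Longrightarrow> G k i j z = G k j i z"
  unfolding G_def christoffel_def da_def[symmetric] using da_sym
  by (simp add: algebra_simps)

lemma da_G: "z \<in> U \<Longrightarrow> da i j k z = (\<Sum>m\<in>UNIV. a z $ i $ m * G m k j z) + (\<Sum>m\<in>UNIV. a z $ j $ m * G m k i z)"
proof -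
  assume z: "z \<in> U"
  show ?thesis unfolding GL[OF z] using da_sym[OF z, of i k j] da_sym[OF z, of k j i] da_sym[OF z, of i j k]
    by (simp add: algebra_simps)
qed

definition "db i k z = pd (\<lambda>w. b w $ i) k z"
definition "dA i j k z = pd (\<lambda>w. A w $ i $ j) k z"
definition "bs i z = (\<Sum>j\<in>UNIV. A z $ i $ j * b z $ j)"

lemma db_G: "z \<in> U \<Longrightarrow> db i k z = (\<Sum>m\<in>UNIV. G m i k z * b z $ m) + c z * a z $ i $ k"
proof -
  assume z: "z \<in> U"
  have "covd a b z i k = c z * a z $ i $ k" using closed z by blast
  then show ?thesis unfolding covd_def db_def G_def by linarith
qed

lemma dA_eq0: "z \<in> U \<Longrightarrow> (\<Sum>m\<in>UNIV. da i m k z * A z $ m $ j + a z $ i $ m * dA m j k z) = 0"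
proof -
  assume z: "z \<in> U"
  have "pd (\<lambda>w. \<Sum>m\<in>UNIV. a w $ i $ m * A w $ m $ j) k z = pd (\<lambda>w. if i = j then 1 else 0) k z"
    by (rule pd_cong[OF U_open z]) (rule aA)
  also have "\<dots> = 0" by (rule pd_const)
  finally have "pd (\<lambda>w. \<Sum>m\<in>UNIV. a w $ i $ m * A w $ m $ j) k z = 0" .
  moreover have "pd (\<lambda>w. \<Sum>m\<in>UNIV. a w $ i $ m * A w $ m $ j) k z
     = (\<Sum>m\<in>UNIV. pd (\<lambda>w. a w $ i $ m * A w $ m $ j) k z)"
    by (rule pd_sum) (auto intro!: differentiable_mult a_diff A_diff z)
  moreover have "\<And>m. pd (\<lambda>w. a w $ i $ m * A w $ m $ j) k z = da i m k z * A z $ m $ j + a z $ i $ m * dA m j k z"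
    unfolding da_def dA_def by (rule pd_mult) (auto intro: a_diff A_diff z)
  ultimately show ?thesis by simp
qed

lemma dA_formula: "z \<in> U \<Longrightarrow> dA p j k z = - (\<Sum>i\<in>UNIV. A z $ p $ i * (\<Sum>m\<in>UNIV. da i m k z * A z $ m $ j))"
proof -
  assume z: "z \<in> U"
  have "(\<Sum>i\<in>UNIV. A z $ p $ i * (\<Sum>m\<in>UNIV. a z $ i $ m * dA m j k z)) = (\<Sum>m\<in>UNIV. (\<Sum>i\<in>UNIV. A z $ p $ i * a z $ i $ m) * dA m j k z)"
    by (rule contract2) auto
  also have "\<dots> = dA p j k z" by (simp add: Aa[OF z] if10_mult)
  finally have e1: "(\<Sum>i\<in>UNIV. A z $ p $ i * (\<Sum>m\<in>UNIV. a z $ i $ m * dA m j k z)) = dA p j k z" .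
  have "\<And>i. (\<Sum>m\<in>UNIV. a z $ i $ m * dA m j k z) = - (\<Sum>m\<in>UNIV. da i m k z * A z $ m $ j)"
    using dA_eq0[OF z] by (simp add: sum.distrib eq_neg_iff_add_eq_0 add.commute)
  then show ?thesis using e1 by (simp add: sum_negf)
qed

lemma bs_a: "z \<in> U \<Longrightarrow> (\<Sum>p\<in>UNIV. bs p z * a z $ p $ r) = b z $ r"
proof -
  assume z: "z \<in> U"
  have "(\<Sum>p\<in>UNIV. bs p z * a z $ p $ r) = (\<Sum>p\<in>UNIV. a z $ r $ p * (\<Sum>j\<in>UNIV. A z $ p $ j * b z $ j))"
    unfolding bs_def using asym[OF z] by (simp add: mult.commute)
  also have "\<dots> = (\<Sum>j\<in>UNIV. (\<Sum>p\<in>UNIV. a z $ r $ p * A z $ p $ j) * b z $ j)"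
    by (rule contract2) auto
  also have "\<dots> = b z $ r" by (simp add: aA[OF z] if10_mult)
  finally show ?thesis .
qed

lemma bnorm2_A: "bnorm2 a b z = (\<Sum>i\<in>UNIV. \<Sum>j\<in>UNIV. A z $ i $ j * b z $ i * b z $ j)"
  unfolding bnorm2_def A_def ..

lemma bs_alt: "z \<in> U \<Longrightarrow> (\<Sum>i\<in>UNIV. b z $ i * A z $ i $ p) = bs p z"
  unfolding bs_def using Asym by (simp add: mult.commute)

lemma sumj_dA: "z \<in> U \<Longrightarrow> (\<Sum>j\<in>UNIV. dA i j k z * b z $ j) = - (\<Sum>p\<in>UNIV. A z $ i $ p * (\<Sum>m\<in>UNIV. da p m k z * bs m z))"
proof -
  assume z: "z \<in> U"
  have "(\<Sum>j\<in>UNIV. dA i j k z * b z $ j) = - (\<Sum>j\<in>UNIV. (\<Sum>p\<in>UNIV. A z $ i $ p * (\<Sum>m\<in>UNIV. da p m k z * A z $ m $ j)) * b z $ j)"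
    by (simp add: dA_formula[OF z] sum_negf)
  also have "(\<Sum>j\<in>UNIV. (\<Sum>p\<in>UNIV. A z $ i $ p * (\<Sum>m\<in>UNIV. da p m k z * A z $ m $ j)) * b z $ j)
     = (\<Sum>p\<in>UNIV. A z $ i $ p * (\<Sum>j\<in>UNIV. (\<Sum>m\<in>UNIV. da p m k z * A z $ m $ j) * b z $ j))"
    by (rule contract2[symmetric]) auto
  also have "\<dots> = (\<Sum>p\<in>UNIV. A z $ i $ p * (\<Sum>m\<in>UNIV. da p m k z * bs m z))"
    unfolding bs_def by (simp add: contract2[symmetric])
  finally show ?thesis .
qed

lemma T1: "z \<in> U \<Longrightarrow> (\<Sum>i\<in>UNIV. \<Sum>j\<in>UNIV. dA i j k z * b z $ i * b z $ j)
    = - 2 * (\<Sum>m\<in>UNIV. bs m z * (\<Sum>r\<in>UNIV. b z $ r * G r k m z))"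
proof -
  assume z: "z \<in> U"
  define W where "W p = (\<Sum>m\<in>UNIV. da p m k z * bs m z)" for p
  have "(\<Sum>i\<in>UNIV. \<Sum>j\<in>UNIV. dA i j k z * b z $ i * b z $ j)
      = (\<Sum>i\<in>UNIV. b z $ i * (\<Sum>j\<in>UNIV. dA i j k z * b z $ j))"
    by (simp add: sum_distrib_left mult_ac)
  also have "\<dots> = - (\<Sum>i\<in>UNIV. b z $ i * (\<Sum>p\<in>UNIV. A z $ i $ p * W p))"
    by (simp add: sumj_dA[OF z] W_def sum_negf)
  also have "(\<Sum>i\<in>UNIV. b z $ i * (\<Sum>p\<in>UNIV. A z $ i $ p * W p)) = (\<Sum>p\<in>UNIV. bs p z * W p)"
    by (simp add: contract2 bs_alt[OF z])
  also have "(\<Sum>p\<in>UNIV. bs p z * W p) = 2 * (\<Sum>m\<in>UNIV. bs m z * (\<Sum>r\<in>UNIV. b z $ r * G r k m z))"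
  proof -
    have W: "W p = (\<Sum>m\<in>UNIV. bs m z * (\<Sum>r\<in>UNIV. a z $ p $ r * G r k m z)) + (\<Sum>r\<in>UNIV. b z $ r * G r k p z)" for p
    proof -
      have "W p = (\<Sum>m\<in>UNIV. bs m z * (\<Sum>r\<in>UNIV. a z $ p $ r * G r k m z)) + (\<Sum>m\<in>UNIV. bs m z * (\<Sum>r\<in>UNIV. a z $ m $ r * G r k p z))"
        unfolding W_def da_G[OF z] by (simp add: algebra_simps sum.distrib)
      also have "(\<Sum>m\<in>UNIV. bs m z * (\<Sum>r\<in>UNIV. a z $ m $ r * G r k p z)) = (\<Sum>r\<in>UNIV. b z $ r * G r k p z)"
        by (simp add: contract2 bs_a[OF z])
      finally show ?thesis .
    qed
    have "(\<Sum>p\<in>UNIV. bs p z * (\<Sum>m\<in>UNIV. bs m z * (\<Sum>r\<in>UNIV. a z $ p $ r * G r k m z)))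
       = (\<Sum>m\<in>UNIV. bs m z * (\<Sum>p\<in>UNIV. bs p z * (\<Sum>r\<in>UNIV. a z $ p $ r * G r k m z)))"
      by (rule swap2) auto
    also have "\<dots> = (\<Sum>m\<in>UNIV. bs m z * (\<Sum>r\<in>UNIV. b z $ r * G r k m z))"
      by (simp add: contract2 bs_a[OF z])
    finally have "(\<Sum>p\<in>UNIV. bs p z * (\<Sum>m\<in>UNIV. bs m z * (\<Sum>r\<in>UNIV. a z $ p $ r * G r k m z)))
       = (\<Sum>m\<in>UNIV. bs m z * (\<Sum>r\<in>UNIV. b z $ r * G r k m z))" .
    then show ?thesis by (simp add: W algebra_simps sum.distrib)
  qed
  finally show ?thesis by simp
qed

lemma T2: "z \<in> U \<Longrightarrow> (\<Sum>i\<in>UNIV. \<Sum>j\<in>UNIV. A z $ i $ j * db i k z * b z $ j)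
    = (\<Sum>m\<in>UNIV. bs m z * (\<Sum>r\<in>UNIV. b z $ r * G r k m z)) + c z * b z $ k"
proof -
  assume z: "z \<in> U"
  have "(\<Sum>i\<in>UNIV. \<Sum>j\<in>UNIV. A z $ i $ j * db i k z * b z $ j) = (\<Sum>i\<in>UNIV. bs i z * db i k z)"
    unfolding bs_def by (simp add: sum_distrib_left sum_distrib_right mult_ac)
  also have "\<dots> = (\<Sum>i\<in>UNIV. bs i z * (\<Sum>m\<in>UNIV. b z $ m * G m k i z)) + c z * (\<Sum>i\<in>UNIV. bs i z * a z $ i $ k)"
    unfolding db_G[OF z] using G_sym[OF z]
    by (simp add: algebra_simps sum.distrib sum_distrib_left)
  also have "(\<Sum>i\<in>UNIV. bs i z * a z $ i $ k) = b z $ k" by (rule bs_a[OF z])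
  finally show ?thesis by simp
qed

lemma T3: "z \<in> U \<Longrightarrow> (\<Sum>i\<in>UNIV. \<Sum>j\<in>UNIV. A z $ i $ j * b z $ i * db j k z)
    = (\<Sum>i\<in>UNIV. \<Sum>j\<in>UNIV. A z $ i $ j * db i k z * b z $ j)"
proof -
  assume z: "z \<in> U"
  have "(\<Sum>i\<in>UNIV. \<Sum>j\<in>UNIV. A z $ i $ j * b z $ i * db j k z) = (\<Sum>j\<in>UNIV. \<Sum>i\<in>UNIV. A z $ i $ j * b z $ i * db j k z)"
    by (rule sum.swap)
  also have "\<dots> = (\<Sum>j\<in>UNIV. \<Sum>i\<in>UNIV. A z $ j $ i * db j k z * b z $ i)"
    using Asym[OF z] by (simp add: mult_ac)
  finally show ?thesis .
qed

lemma Ab_diff: "z \<in> U \<Longrightarrow> (\<lambda>w. A w $ i $ j * b w $ i * b w $ j) differentiable (at z)"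
  by (intro differentiable_mult A_diff b_diff)

lemma bn_diff: "z \<in> U \<Longrightarrow> bnorm2 a b differentiable (at z)"
proof -
  assume z: "z \<in> U"
  have "(\<lambda>w. \<Sum>i\<in>UNIV. \<Sum>j\<in>UNIV. A w $ i $ j * b w $ i * b w $ j) differentiable (at z)"
    apply (rule differentiable_sum)
    apply (auto intro!: differentiable_sum Ab_diff z)
    done
  then show ?thesis unfolding bnorm2_A[abs_def] by simp
qed

lemma d_bnorm2: "z \<in> U \<Longrightarrow> pd (bnorm2 a b) k z = 2 * c z * b z $ k"
proof -
  assume z: "z \<in> U"
  have "pd (bnorm2 a b) k z = pd (\<lambda>w. \<Sum>i\<in>UNIV. \<Sum>j\<in>UNIV. A w $ i $ j * b w $ i * b w $ j) k z"
    unfolding bnorm2_A[abs_def] ..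
  also have "\<dots> = (\<Sum>i\<in>UNIV. pd (\<lambda>w. \<Sum>j\<in>UNIV. A w $ i $ j * b w $ i * b w $ j) k z)"
    apply (rule pd_sum)
    apply simp
    apply (rule differentiable_sum)
    apply (auto intro: Ab_diff z)
    done
  also have "\<dots> = (\<Sum>i\<in>UNIV. \<Sum>j\<in>UNIV. pd (\<lambda>w. A w $ i $ j * b w $ i * b w $ j) k z)"
    by (intro sum.cong refl pd_sum) (auto intro!: Ab_diff z)
  also have "\<dots> = (\<Sum>i\<in>UNIV. \<Sum>j\<in>UNIV. dA i j k z * b z $ i * b z $ j + A z $ i $ j * db i k z * b z $ j + A z $ i $ j * b z $ i * db j k z)"
  proof (intro sum.cong refl)
    fix i j
    have "pd (\<lambda>w. A w $ i $ j * b w $ i * b w $ j) k z = pd (\<lambda>w. A w $ i $ j * b w $ i) k z * b z $ j + A z $ i $ j * b z $ i * db j k z"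
      unfolding db_def by (rule pd_mult) (auto intro!: differentiable_mult A_diff b_diff z)
    moreover have "pd (\<lambda>w. A w $ i $ j * b w $ i) k z = dA i j k z * b z $ i + A z $ i $ j * db i k z"
      unfolding db_def dA_def by (rule pd_mult) (auto intro!: A_diff b_diff z)
    ultimately show "pd (\<lambda>w. A w $ i $ j * b w $ i * b w $ j) k z = dA i j k z * b z $ i * b z $ j + A z $ i $ j * db i k z * b z $ j + A z $ i $ j * b z $ i * db j k z"
      by (simp add: algebra_simps)
  qed
  also have "\<dots> = 2 * c z * b z $ k"
    by (simp add: sum.distrib T1[OF z] T2[OF z] T3[OF z])
  finally show ?thesis .
qed

lemma D_diff: "z \<in> U \<Longrightarrow> D differentiable (at z)"
  unfolding D_def[abs_def] by (intro differentiable_diff differentiable_mult differentiable_const bn_diff)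

lemma dD: "z \<in> U \<Longrightarrow> pd D k z = - 2 * \<mu> * c z * b z $ k"
proof -
  assume z: "z \<in> U"
  have "pd D k z = pd (\<lambda>w. \<kappa> - \<mu> * bnorm2 a b w) k z" unfolding D_def[abs_def] ..
  also have "\<dots> = 0 - \<mu> * pd (bnorm2 a b) k z"
    using pd_diff[of "\<lambda>_. \<kappa>" z "\<lambda>w. \<mu> * bnorm2 a b w"] pd_cmult[of "bnorm2 a b" z \<mu>] bn_diff[OF z]
    by (simp add: pd_const)
  finally show ?thesis by (simp add: d_bnorm2[OF z])
qed

end



context L begin

lemma D_pos: "z \<in> U \<Longrightarrow> D z > 0"
  using pos unfolding D_def by blast

lemma D_c: "z \<in> U \<Longrightarrow> D z = c z * c z"
  using c_sq unfolding D_def by (simp add: power2_eq_square)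

lemma c_nz: "z \<in> U \<Longrightarrow> c z \<noteq> 0"
  using D_pos D_c by fastforce

lemma G_diff: "z \<in> U \<Longrightarrow> (\<lambda>w. G k i j w) differentiable (at z)"
proof -
  assume z: "z \<in> U"
  have "(\<lambda>w. (1/2) * (\<Sum>l\<in>UNIV. A w $ k $ l *
      (pd (\<lambda>z. a z $ l $ j) i w + pd (\<lambda>z. a z $ l $ i) j w - pd (\<lambda>z. a z $ i $ j) l w))) differentiable (at z)"
    apply (rule differentiable_mult)
     apply simp
    apply (rule differentiable_sum)
     apply (auto intro!: differentiable_mult differentiable_add differentiable_diff A_diff a_diff2 z)
    done
  then show ?thesis unfolding G_def christoffel_def A_def .
qed

lemma a_diag_pos: "z \<in> U \<Longrightarrow> a z $ i $ i > 0"
proof -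
  assume z: "z \<in> U"
  have "quadf a z (axis i 1) > 0" using a_posdef z by (simp add: axis_eq_0_iff)
  moreover have "quadf a z (axis i 1) = a z $ i $ i"
    unfolding quadf_def by (simp add: axis_def if10_mult mult_if10)
  ultimately show ?thesis by simp
qed

lemma c_diff: "z \<in> U \<Longrightarrow> c differentiable (at z)"
proof -
  assume z: "z \<in> U"
  fix i :: 'n
  have "(\<lambda>w. (pd (\<lambda>w. b w $ i) i w - (\<Sum>k\<in>UNIV. G k i i w * b w $ k)) / a w $ i $ i) differentiable (at z)"
    apply (rule differentiable_divide)
      apply (rule differentiable_diff)
       apply (rule b_diff2[OF z])
      apply (rule differentiable_sum)
       apply (auto intro!: differentiable_mult G_diff b_diff a_diff z)
    using a_diag_pos[OF z, of i] by simp
  then show ?thesis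
  proof (rule diff_cong_open[OF _ U_open z])
    fix w assume w: "w \<in> U"
    have "covd a b w i i = c w * a w $ i $ i" using closed w by blast
    then show "(pd (\<lambda>w. b w $ i) i w - (\<Sum>k\<in>UNIV. G k i i w * b w $ k)) / a w $ i $ i = c w"
      using a_diag_pos[OF w, of i] unfolding covd_def G_def by simp
  qed
qed

lemma dc: "z \<in> U \<Longrightarrow> pd c k z = - \<mu> * b z $ k"
proof -
  assume z: "z \<in> U"
  have "pd D k z = pd (\<lambda>w. c w * c w) k z"
    by (rule pd_cong[OF U_open z]) (rule D_c)
  also have "\<dots> = 2 * c z * pd c k z" using pd_mult[OF c_diff[OF z] c_diff[OF z]] by simp
  finally have "2 * c z * pd c k z = - 2 * \<mu> * c z * b z $ k" using dD[OF z] by simp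
  then have "c z * pd c k z = c z * (- \<mu> * b z $ k)" by (simp add: algebra_simps)
  then show ?thesis using c_nz[OF z] mult_left_cancel by blast
qed

definition "P j z = \<mu> * (c z * b z $ j) / D z"

lemma P_diff: "z \<in> U \<Longrightarrow> P j differentiable (at z)"
  unfolding P_def[abs_def] using D_pos[of z]
  by (intro differentiable_divide differentiable_mult differentiable_const c_diff b_diff D_diff) auto

lemma dP: "z \<in> U \<Longrightarrow> pd (P j) k z = (\<Sum>m\<in>UNIV. G m j k z * P m z) + \<mu> * a z $ j $ k + P j z * P k z"
proof -
  assume z: "z \<in> U"
  define S where "S = (\<Sum>m\<in>UNIV. G m j k z * b z $ m)"
  have Dz: "D z \<noteq> 0" using D_pos[OF z] by simp
  have e1: "pd (\<lambda>w. c w * b w $ j) k z = - \<mu> * b z $ k * b z $ j + c z * (S + c z * a z $ j $ k)"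
    using pd_mult[OF c_diff[OF z] b_diff[OF z], of j k] dc[OF z] db_G[OF z, of j k]
    unfolding db_def S_def by (simp add: mult.commute)
  have e2: "pd (\<lambda>w. \<mu> * (c w * b w $ j)) k z = \<mu> * (- \<mu> * b z $ k * b z $ j + c z * (S + c z * a z $ j $ k))"
    using pd_cmult[of "\<lambda>w. c w * b w $ j" z \<mu> k] e1 c_diff[OF z] b_diff[OF z] by simp
  have "pd (P j) k z = (\<mu> * (- \<mu> * b z $ k * b z $ j + c z * (S + c z * a z $ j $ k)) * D z
        - \<mu> * (c z * b z $ j) * (- 2 * \<mu> * c z * b z $ k)) / (D z)^2"
    unfolding P_def[abs_def]
    using pd_divide[of "\<lambda>w. \<mu> * (c w * b w $ j)" z D k] e2 dD[OF z] Dz D_diff[OF z] c_diff[OF z] b_diff[OF z]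
    by simp
  also have "\<dots> = \<mu> * c z * S / D z + \<mu> * a z $ j $ k + P j z * P k z"
    unfolding P_def using Dz D_c[OF z] by (simp add: field_simps power2_eq_square)
  also have "\<mu> * c z * S / D z = (\<Sum>m\<in>UNIV. G m j k z * P m z)"
    unfolding S_def P_def by (simp add: sum_distrib_left sum_divide_distrib mult_ac)
  finally show ?thesis .
qed

end



context L begin

definition "ab z = abar \<kappa> \<mu> a b z"
definition "bb z = bbar \<kappa> \<mu> a b z"
definition "sc z = \<bar>\<mu>\<bar> powr (3/2) / D z powr (3/2)"
definition "beta2 z = bnorm2 a b z"

lemma ab_eq: "ab z $ i $ j = (\<bar>\<mu>\<bar> / D z) * (a z $ i $ j + (\<mu> / D z) * (b z $ i * b z $ j))"
  unfolding ab_def abar_def D_def by (simp add: Let_def)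

lemma bb_eq: "bb z $ i = sc z * b z $ i"
  unfolding bb_def bbar_def sc_def D_def by (simp add: Let_def)

lemma beta2_bs: "beta2 z = (\<Sum>i\<in>UNIV. b z $ i * bs i z)"
  unfolding beta2_def bnorm2_A bs_def by (simp add: sum_distrib_left mult_ac)

lemma a_bs: "z \<in> U \<Longrightarrow> (\<Sum>k\<in>UNIV. a z $ i $ k * bs k z) = b z $ i"
  using bs_a[of z i] asym[of z] by (simp add: mult.commute)

lemma D_beta: "D z = \<kappa> - \<mu> * beta2 z"
  unfolding D_def beta2_def ..

definition "Mi z = (\<chi> i j. (D z / \<bar>\<mu>\<bar>) * (A z $ i $ j - (\<mu> / \<kappa>) * (bs i z * bs j z)))"

lemma ab_Mi: "z \<in> U \<Longrightarrow> ab z ** Mi z = mat 1"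
proof -
  assume z: "z \<in> U"
  have Dz: "D z \<noteq> 0" using D_pos[OF z] by simp
  show ?thesis
  proof (subst vec_eq_iff, intro allI, subst vec_eq_iff, intro allI)
    fix i j
    have "(ab z ** Mi z) $ i $ j = (\<Sum>k\<in>UNIV. (a z $ i $ k + (\<mu> / D z) * (b z $ i * b z $ k)) * (A z $ k $ j - (\<mu> / \<kappa>) * (bs k z * bs j z)))"
      unfolding mat_mult_entry ab_eq Mi_def using Dz mu_nz
      by (simp add: sum_distrib_left mult_ac)
    also have "\<dots> = (\<Sum>k\<in>UNIV. a z $ i $ k * A z $ k $ j) - (\<mu> / \<kappa>) * (\<Sum>k\<in>UNIV. a z $ i $ k * bs k z) * bs j z
       + (\<mu> / D z) * b z $ i * (\<Sum>k\<in>UNIV. b z $ k * A z $ k $ j)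
       - (\<mu> / D z) * (\<mu> / \<kappa>) * b z $ i * (\<Sum>k\<in>UNIV. b z $ k * bs k z) * bs j z"
      by (simp add: algebra_simps sum.distrib sum_subtractf sum_distrib_left sum_divide_distrib)
    also have "\<dots> = (if i = j then 1 else 0) - (\<mu> / \<kappa>) * b z $ i * bs j z
       + (\<mu> / D z) * b z $ i * bs j z - (\<mu> / D z) * (\<mu> / \<kappa>) * b z $ i * beta2 z * bs j z"
      by (simp add: aA[OF z] a_bs[OF z] bs_alt[OF z] beta2_bs)
    also have "\<dots> = (if i = j then 1 else 0)"
    proof -
      have "- (\<mu> / \<kappa>) * X + (\<mu> / D z) * X - (\<mu> / D z) * (\<mu> / \<kappa>) * beta2 z * X = 0" for X
        using Dz kappa_nz unfolding D_beta by (simp add: field_simps)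
      from this[of "b z $ i * bs j z"] show ?thesis by (simp add: algebra_simps)
    qed
    finally show "(ab z ** Mi z) $ i $ j = mat 1 $ i $ j" by (simp add: mat1_entry)
  qed
qed

lemma abinv: "z \<in> U \<Longrightarrow> matrix_inv (ab z) = Mi z"
  by (rule minv_unique[OF ab_Mi])

lemma abinv_entry: "z \<in> U \<Longrightarrow> matrix_inv (ab z) $ i $ j = (D z / \<bar>\<mu>\<bar>) * (A z $ i $ j - (\<mu> / \<kappa>) * (bs i z * bs j z))"
  by (simp add: abinv Mi_def)

end



lemma powr32_sq: "(x::real) > 0 \<Longrightarrow> (x powr (3/2))^2 = x^3"
proof -
  assume x: "x > 0"
  have "(x powr (3/2))^2 = x powr (3/2) * x powr (3/2)" by (simp add: power2_eq_square)
  also have "\<dots> = x powr 3" by (simp add: powr_add[symmetric])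
  also have "\<dots> = x^3" using x powr_realpow[of x 3] by simp
  finally show ?thesis .
qed

lemma alg3:
  fixes d m \<beta> :: real
  assumes "d > 0" "m \<noteq> 0" "d + m * \<beta> \<noteq> 0"
  shows "d * (1/(d + m * \<beta>) + (1/m) * (m^2 / d^2) * (\<beta> - (m / (d + m * \<beta>)) * \<beta>^2)) = 1"
proof -
  have e1: "\<beta> - (m / (d + m * \<beta>)) * \<beta>^2 = d * \<beta> / (d + m * \<beta>)"
    using assms(3) by (simp add: field_simps power2_eq_square)
  have e2: "(1/m) * (m^2 / d^2) * (d * \<beta> / (d + m * \<beta>)) = m * \<beta> / (d * (d + m * \<beta>))"
    using assms by (simp add: field_simps power2_eq_square)
  have e3: "d * (m * \<beta> / (d * (d + m * \<beta>))) = m * \<beta> / (d + m * \<beta>)"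
    using assms(1) by simp
  have "d * (1/(d + m * \<beta>) + m * \<beta> / (d * (d + m * \<beta>))) = d * (1/(d + m * \<beta>)) + d * (m * \<beta> / (d * (d + m * \<beta>)))"
    by (rule distrib_left)
  also have "\<dots> = d / (d + m * \<beta>) + m * \<beta> / (d + m * \<beta>)" unfolding e3 by simp
  also have "\<dots> = (d + m * \<beta>) / (d + m * \<beta>)" by (rule add_divide_distrib[symmetric])
  also have "\<dots> = 1" using assms(3) by simp
  finally show ?thesis unfolding e1 e2 .
qed

context L begin

lemma sc_sq: "z \<in> U \<Longrightarrow> (sc z)^2 = \<bar>\<mu>\<bar>^3 / (D z)^3"
  unfolding sc_def using D_pos[of z] mu_nz by (simp add: power_divide powr32_sq)

lemma bn_bar: "z \<in> U \<Longrightarrow> bnorm2 (abar \<kappa> \<mu> a b) (bbar \<kappa> \<mu> a b) z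
    = (sc z)^2 * (D z / \<bar>\<mu>\<bar>) * (beta2 z - (\<mu> / \<kappa>) * (beta2 z)^2)"
proof -
  assume z: "z \<in> U"
  have "bnorm2 (abar \<kappa> \<mu> a b) (bbar \<kappa> \<mu> a b) z
     = (\<Sum>i\<in>UNIV. \<Sum>j\<in>UNIV. (D z / \<bar>\<mu>\<bar>) * (A z $ i $ j - (\<mu> / \<kappa>) * (bs i z * bs j z)) * (sc z * b z $ i) * (sc z * b z $ j))"
    unfolding bnorm2_def ab_def[symmetric] bb_def[symmetric] abinv_entry[OF z] bb_eq ..
  also have "\<dots> = (sc z)^2 * (D z / \<bar>\<mu>\<bar>) * ((\<Sum>i\<in>UNIV. \<Sum>j\<in>UNIV. A z $ i $ j * b z $ i * b z $ j)
        - (\<mu> / \<kappa>) * ((\<Sum>i\<in>UNIV. b z $ i * bs i z) * (\<Sum>j\<in>UNIV. b z $ j * bs j z)))"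
    by (simp add: algebra_simps sum_distrib_left sum_distrib_right sum_subtractf power2_eq_square sum_divide_distrib)
  also have "\<dots> = (sc z)^2 * (D z / \<bar>\<mu>\<bar>) * (beta2 z - (\<mu> / \<kappa>) * (beta2 z)^2)"
    unfolding beta2_bs[symmetric] beta2_def[symmetric] bnorm2_A[symmetric] by (simp add: power2_eq_square)
  finally show ?thesis .
qed

lemma part3: "z \<in> U \<Longrightarrow> (\<kappa> - \<mu> * bnorm2 a b z) * (1/\<kappa> + (1/\<mu>) * bnorm2 (abar \<kappa> \<mu> a b) (bbar \<kappa> \<mu> a b) z) = 1"
proof -
  assume z: "z \<in> U"
  have Dz: "D z > 0" by (rule D_pos[OF z])
  have e: "\<bar>\<mu>\<bar>^3 / (D z)^3 * (D z / \<bar>\<mu>\<bar>) = \<mu>^2 / (D z)^2"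
    using Dz mu_nz by (simp add: field_simps power2_eq_square power3_eq_cube)
  have "(\<kappa> - \<mu> * bnorm2 a b z) * (1/\<kappa> + (1/\<mu>) * bnorm2 (abar \<kappa> \<mu> a b) (bbar \<kappa> \<mu> a b) z)
    = D z * (1/\<kappa> + (1/\<mu>) * ((\<bar>\<mu>\<bar>^3 / (D z)^3) * (D z / \<bar>\<mu>\<bar>)) * (beta2 z - (\<mu> / \<kappa>) * (beta2 z)^2))"
    unfolding bn_bar[OF z] sc_sq[OF z] D_def[symmetric] by (simp add: mult.assoc)
  also have "\<dots> = D z * (1/\<kappa> + (1/\<mu>) * (\<mu>^2 / (D z)^2) * (beta2 z - (\<mu> / \<kappa>) * (beta2 z)^2))"
    unfolding e ..
  also have "\<dots> = 1"
  proof -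
    have k: "\<kappa> = D z + \<mu> * beta2 z" using D_beta[of z] by simp
    show ?thesis using alg3[of "D z" \<mu> "beta2 z"] Dz mu_nz kappa_nz unfolding k[symmetric] by simp
  qed
  finally show ?thesis .
qed

lemma quad_ab: "quadf (abar \<kappa> \<mu> a b) z y = (\<bar>\<mu>\<bar> / D z) * (quadf a z y + (\<mu> / D z) * (oneform b z y)^2)"
proof -
  have "quadf (abar \<kappa> \<mu> a b) z y = (\<Sum>i\<in>UNIV. \<Sum>j\<in>UNIV. (\<bar>\<mu>\<bar> / D z) * (a z $ i $ j + (\<mu> / D z) * (b z $ i * b z $ j)) * y $ i * y $ j)"
    unfolding quadf_def ab_def[symmetric] ab_eq ..
  also have "\<dots> = (\<bar>\<mu>\<bar> / D z) * ((\<Sum>i\<in>UNIV. \<Sum>j\<in>UNIV. a z $ i $ j * y $ i * y $ j)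
       + (\<mu> / D z) * ((\<Sum>i\<in>UNIV. b z $ i * y $ i) * (\<Sum>j\<in>UNIV. b z $ j * y $ j)))"
    by (simp add: algebra_simps sum_distrib_left sum_distrib_right sum.distrib sum_divide_distrib)
  finally show ?thesis unfolding quadf_def oneform_def by (simp add: power2_eq_square)
qed

lemma one_bb: "oneform (bbar \<kappa> \<mu> a b) z y = sc z * oneform b z y"
  unfolding oneform_def bb_def[symmetric] bb_eq by (simp add: sum_distrib_left mult_ac)

lemma alg4:
  fixes d m q \<beta> s :: real
  assumes "d > 0" "m \<noteq> 0" "s^2 = \<bar>m\<bar>^3 / d^3"
  shows "q = ((1/\<bar>m\<bar>) / (1/d)) * ((\<bar>m\<bar> / d) * (q + (m / d) * \<beta>^2) - ((1/m) / (1/d)) * (s * \<beta>)^2)"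
proof -
  have "((1/m) / (1/d)) * (s * \<beta>)^2 = (d / m) * (\<bar>m\<bar>^3 / d^3) * \<beta>^2"
    using assms by (simp add: power_mult_distrib)
  also have "\<dots> = (\<bar>m\<bar> / d) * (m / d) * \<beta>^2"
    using assms by (simp add: field_simps power2_eq_square power3_eq_cube abs_mult_self_eq)
  finally have e: "((1/m) / (1/d)) * (s * \<beta>)^2 = (\<bar>m\<bar> / d) * (m / d) * \<beta>^2" .
  show ?thesis unfolding e using assms by (simp add: field_simps)
qed

lemma alg5:
  fixes d m \<beta> :: real
  assumes "d > 0" "m \<noteq> 0"
  shows "\<beta> = (\<bar>m\<bar> powr (-3/2) / (1/d) powr (3/2)) * ((\<bar>m\<bar> powr (3/2) / d powr (3/2)) * \<beta>)"
proof -
  have "\<bar>m\<bar> powr (-3/2) * \<bar>m\<bar> powr (3/2) = 1"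
    using assms by (simp add: powr_add[symmetric])
  moreover have "(1/d) powr (3/2) * d powr (3/2) = 1"
    using assms by (simp add: powr_mult[symmetric])
  moreover have "d powr (3/2) > 0" "\<bar>m\<bar> powr (3/2) > 0" using assms by auto
  ultimately show ?thesis by (simp add: field_simps)
qed

lemma part4: "z \<in> U \<Longrightarrow>
   (let E = 1/\<kappa> + (1/\<mu>) * bnorm2 (abar \<kappa> \<mu> a b) (bbar \<kappa> \<mu> a b) z in
           quadf a z y = ((1/\<bar>\<mu>\<bar>) / E) *
               (quadf (abar \<kappa> \<mu> a b) z y - ((1/\<mu>) / E) * (oneform (bbar \<kappa> \<mu> a b) z y)\<^sup>2)
         \<and> oneform b z y = (\<bar>\<mu>\<bar> powr (-3/2) / E powr (3/2)) * oneform (bbar \<kappa> \<mu> a b) z y)"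
proof -
  assume z: "z \<in> U"
  have Dz: "D z > 0" by (rule D_pos[OF z])
  have E: "1/\<kappa> + (1/\<mu>) * bnorm2 (abar \<kappa> \<mu> a b) (bbar \<kappa> \<mu> a b) z = 1 / D z"
    using part3[OF z] Dz unfolding D_def[symmetric] by (simp add: field_simps)
  show ?thesis unfolding E Let_def quad_ab one_bb
    using alg4[OF Dz mu_nz sc_sq[OF z], of "quadf a z y" "oneform b z y"]
      alg5[OF Dz mu_nz, of "oneform b z y"]
    unfolding sc_def by simp
qed

end



lemma alg_low:
  fixes m am d c ll li lj ij bl bi bj Glij Gjli Gilj Bli Blj Bij :: real
  assumes "d \<noteq> 0"
  shows "(1/2) * (((2 * am * m * c * bi / d^2) * (lj + (m / d) * (bl * bj))
        + (am / d) * ((Glij + Gjli) + ((2 * m * m * c * bi / d^2) * (bl * bj) + (m / d) * ((Bli + c * li) * bj + bl * (Bij + c * ij)))))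
     + ((2 * am * m * c * bj / d^2) * (li + (m / d) * (bl * bi))
        + (am / d) * ((Glij + Gilj) + ((2 * m * m * c * bj / d^2) * (bl * bi) + (m / d) * ((Blj + c * lj) * bi + bl * (Bij + c * ij)))))
     - ((2 * am * m * c * bl / d^2) * (ij + (m / d) * (bi * bj))
        + (am / d) * ((Gilj + Gjli) + ((2 * m * m * c * bl / d^2) * (bi * bj) + (m / d) * ((Bli + c * li) * bj + bi * (Blj + c * lj))))))
   = (am/d) * Glij + (am/d) * (m/d) * bl * Bij + (m * (c * bi) / d) * ((am/d) * (lj + (m/d) * (bl * bj)))
     + (m * (c * bj) / d) * ((am/d) * (li + (m/d) * (bl * bi)))"
  using assms by (simp add: field_simps power2_eq_square)

lemma mult_if0: "x * (if P then y else 0) = (if P then x * y else (0::real))"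
  by auto

context L begin

definition "dab i j k z = pd (\<lambda>w. abar \<kappa> \<mu> a b w $ i $ j) k z"

lemma pd_phi: "z \<in> U \<Longrightarrow> pd (\<lambda>w. C / D w) k z = 2 * C * \<mu> * c z * b z $ k / (D z)^2"
proof -
  assume z: "z \<in> U"
  have "pd (\<lambda>w. C / D w) k z = (0 * D z - C * pd D k z) / (D z)^2"
    using pd_divide[of "\<lambda>w. C" z D k] D_diff[OF z] D_pos[OF z] by (simp add: pd_const)
  then show ?thesis by (simp add: dD[OF z])
qed

lemma dab_formula: "z \<in> U \<Longrightarrow> dab i j k z =
   (2 * \<bar>\<mu>\<bar> * \<mu> * c z * b z $ k / (D z)^2) * (a z $ i $ j + (\<mu> / D z) * (b z $ i * b z $ j))
   + (\<bar>\<mu>\<bar> / D z) * (da i j k z + ((2 * \<mu> * \<mu> * c z * b z $ k / (D z)^2) * (b z $ i * b z $ j)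
        + (\<mu> / D z) * (db i k z * b z $ j + b z $ i * db j k z)))"
proof -
  assume z: "z \<in> U"
  have Dz: "D z \<noteq> 0" using D_pos[OF z] by simp
  have dphi: "(\<lambda>w. C / D w) differentiable (at z)" for C
    using D_diff[OF z] Dz by (intro differentiable_divide) auto
  have dbb: "(\<lambda>w. b w $ i * b w $ j) differentiable (at z)" by (intro differentiable_mult b_diff z)
  have d2: "(\<lambda>w. \<mu> / D w * (b w $ i * b w $ j)) differentiable (at z)"
    by (intro differentiable_mult dphi dbb)
  have d3: "(\<lambda>w. a w $ i $ j + \<mu> / D w * (b w $ i * b w $ j)) differentiable (at z)"
    by (rule differentiable_add[OF a_diff[OF z] d2])
  have p1: "pd (\<lambda>w. b w $ i * b w $ j) k z = db i k z * b z $ j + b z $ i * db j k z"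
    unfolding db_def by (rule pd_mult) (auto intro: b_diff z)
  have p2: "pd (\<lambda>w. \<mu> / D w * (b w $ i * b w $ j)) k z
     = (2 * \<mu> * \<mu> * c z * b z $ k / (D z)^2) * (b z $ i * b z $ j) + (\<mu> / D z) * (db i k z * b z $ j + b z $ i * db j k z)"
    using pd_mult[OF dphi dbb, of \<mu> k] pd_phi[OF z, of \<mu> k] p1 by simp
  have p3: "pd (\<lambda>w. a w $ i $ j + \<mu> / D w * (b w $ i * b w $ j)) k z = da i j k z + pd (\<lambda>w. \<mu> / D w * (b w $ i * b w $ j)) k z"
    unfolding da_def by (rule pd_add[OF a_diff[OF z] d2])
  have "dab i j k z = pd (\<lambda>w. (\<bar>\<mu>\<bar> / D w) * (a w $ i $ j + (\<mu> / D w) * (b w $ i * b w $ j))) k z"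
    unfolding dab_def ab_def[symmetric] ab_eq ..
  also have "\<dots> = pd (\<lambda>w. \<bar>\<mu>\<bar> / D w) k z * (a z $ i $ j + (\<mu> / D z) * (b z $ i * b z $ j))
      + (\<bar>\<mu>\<bar> / D z) * pd (\<lambda>w. a w $ i $ j + \<mu> / D w * (b w $ i * b w $ j)) k z"
    by (rule pd_mult[OF dphi d3])
  finally show ?thesis unfolding p3 p2 pd_phi[OF z] .
qed

definition "GLv l i j z = (\<Sum>m\<in>UNIV. a z $ l $ m * G m i j z)"
definition "Gbv i j z = (\<Sum>m\<in>UNIV. G m i j z * b z $ m)"

lemma GLv_sym: "z \<in> U \<Longrightarrow> GLv l i j z = GLv l j i z"
  unfolding GLv_def using G_sym by simp

lemma Gbv_sym: "z \<in> U \<Longrightarrow> Gbv i j z = Gbv j i z"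
  unfolding Gbv_def using G_sym by simp

lemma da_GLv: "z \<in> U \<Longrightarrow> da i j k z = GLv i k j z + GLv j k i z"
  unfolding GLv_def by (rule da_G)

lemma db_Gbv: "z \<in> U \<Longrightarrow> db i k z = Gbv i k z + c z * a z $ i $ k"
  unfolding Gbv_def by (rule db_G)

lemma abG: "(\<Sum>m\<in>UNIV. ab z $ l $ m * G m i j z) = (\<bar>\<mu>\<bar>/D z) * GLv l i j z + (\<bar>\<mu>\<bar>/D z) * (\<mu>/D z) * b z $ l * Gbv i j z"
  unfolding ab_eq GLv_def Gbv_def
  by (simp add: algebra_simps sum.distrib sum_distrib_left sum_divide_distrib)

lemma lowered: "z \<in> U \<Longrightarrow> (1/2) * (dab l j i z + dab l i j z - dab i j l z)
   = (\<Sum>m\<in>UNIV. ab z $ l $ m * G m i j z) + P i z * ab z $ l $ j + P j z * ab z $ l $ i"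
proof -
  assume z: "z \<in> U"
  have Dz: "D z \<noteq> 0" using D_pos[OF z] by simp
  have s1: "GLv j i l z = GLv j l i z" "GLv l j i z = GLv l i j z" "GLv i j l z = GLv i l j z"
    using GLv_sym[OF z] by auto
  have s2: "Gbv j i z = Gbv i j z" "Gbv i l z = Gbv l i z" "Gbv j l z = Gbv l j z"
    using Gbv_sym[OF z] by auto
  have s3: "a z $ j $ i = a z $ i $ j" "a z $ i $ l = a z $ l $ i" "a z $ j $ l = a z $ l $ j"
    using asym[OF z] by auto
  show ?thesis
    unfolding abG
    unfolding dab_formula[OF z] da_GLv[OF z] db_Gbv[OF z] P_def ab_eq s1 s2 s3
    by (rule alg_low[OF Dz])
qed

lemma Minv_ab: "z \<in> U \<Longrightarrow> (\<Sum>l\<in>UNIV. matrix_inv (ab z) $ k $ l * ab z $ l $ m) = (if k = m then 1 else 0)"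
proof -
  assume z: "z \<in> U"
  have "matrix_inv (ab z) ** ab z = mat 1"
    using ab_Mi[OF z] abinv[OF z] matrix_left_right_inverse by metis
  then have "(matrix_inv (ab z) ** ab z) $ k $ m = mat 1 $ k $ m" by simp
  then show ?thesis unfolding mat_mult_entry mat1_entry .
qed

lemma chr_bar: "z \<in> U \<Longrightarrow> christoffel (abar \<kappa> \<mu> a b) k i j z
   = G k i j z + P i z * (if k = j then 1 else 0) + P j z * (if k = i then 1 else 0)"
proof -
  assume z: "z \<in> U"
  define X where "X m = G m i j z + P i z * (if m = j then 1 else 0) + P j z * (if m = i then 1 else 0)" for m
  have low: "(1/2) * (dab l j i z + dab l i j z - dab i j l z) = (\<Sum>m\<in>UNIV. ab z $ l $ m * X m)" for l
    unfolding lowered[OF z] X_def by (simp add: algebra_simps sum.distrib mult_if10 if10_mult mult_if0)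
  have "christoffel (abar \<kappa> \<mu> a b) k i j z = (\<Sum>l\<in>UNIV. matrix_inv (ab z) $ k $ l * ((1/2) * (dab l j i z + dab l i j z - dab i j l z)))"
    unfolding christoffel_def dab_def ab_def by (simp add: sum_distrib_left mult_ac)
  also have "\<dots> = (\<Sum>l\<in>UNIV. matrix_inv (ab z) $ k $ l * (\<Sum>m\<in>UNIV. ab z $ l $ m * X m))"
    unfolding low ..
  also have "\<dots> = (\<Sum>m\<in>UNIV. (\<Sum>l\<in>UNIV. matrix_inv (ab z) $ k $ l * ab z $ l $ m) * X m)"
    by (rule contract2) auto
  also have "\<dots> = X k" by (simp add: Minv_ab[OF z] if10_mult)
  finally show ?thesis unfolding X_def .
qed

end



lemma powr32: "(x::real) > 0 \<Longrightarrow> x powr (3/2) = x * sqrt x"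
proof -
  assume x: "x > 0"
  have "x powr (3/2) = x powr (1 + 1/2)" by simp
  also have "\<dots> = x powr 1 * x powr (1/2)" by (rule powr_add)
  also have "\<dots> = x * sqrt x" using x by (simp add: powr_half_sqrt)
  finally show ?thesis .
qed

lemma alg_cov:
  fixes s g c aij bi bj m am d :: real
  assumes "d \<noteq> 0" "am \<noteq> 0"
  shows "3 * s * (m * (c * bj) / d) * bi + s * (g + c * aij) - (s * g + s * (m * (c * bi) / d) * bj + s * (m * (c * bj) / d) * bi)
    = (s * c * d / am) * ((am / d) * (aij + (m / d) * (bi * bj)))"
  using assms by (simp add: field_simps)

context L begin

lemma dsc: "z \<in> U \<Longrightarrow> pd sc j z = 3 * sc z * P j z"
proof -
  assume z: "z \<in> U"
  have Dz: "D z > 0" by (rule D_pos[OF z])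
  have dpow: "(\<lambda>w. D w powr (3/2)) differentiable (at z)"
  proof -
    obtain g' where g: "(D has_derivative g') (at z)" using D_diff[OF z] unfolding differentiable_def by blast
    note h = has_derivative_powr[OF g has_derivative_const[of "3/2"] Dz UNIV_I]
    then show ?thesis unfolding differentiable_def by auto
  qed
  have pp: "pd (\<lambda>w. D w powr (3/2)) j z = (3/2) * sqrt (D z) * (- 2 * \<mu> * c z * b z $ j)"
    using pd_powr[OF D_diff[OF z] Dz, of "3/2" j] dD[OF z] Dz by (simp add: powr_half_sqrt)
  have "pd sc j z = (0 * D z powr (3/2) - \<bar>\<mu>\<bar> powr (3/2) * pd (\<lambda>w. D w powr (3/2)) j z) / (D z powr (3/2))^2"
    unfolding sc_def[abs_def] using pd_divide[of "\<lambda>w. \<bar>\<mu>\<bar> powr (3/2)" z "\<lambda>w. D w powr (3/2)" j] dpow Dz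
    by (simp add: pd_const)
  also have "\<dots> = 3 * sc z * P j z"
    unfolding pp sc_def P_def powr32[OF Dz] using Dz
    by (simp add: field_simps power2_eq_square)
  finally show ?thesis .
qed

lemma sc_diff: "z \<in> U \<Longrightarrow> sc differentiable (at z)"
proof -
  assume z: "z \<in> U"
  have Dz: "D z > 0" by (rule D_pos[OF z])
  obtain g' where g: "(D has_derivative g') (at z)" using D_diff[OF z] unfolding differentiable_def by blast
  note h = has_derivative_powr[OF g has_derivative_const[of "3/2"] Dz UNIV_I]
  then have "(\<lambda>w. D w powr (3/2)) differentiable (at z)" unfolding differentiable_def by auto
  then show ?thesis unfolding sc_def[abs_def] using Dz by (intro differentiable_divide) auto
qed

lemma covd_bar: "z \<in> U \<Longrightarrow> covd (abar \<kappa> \<mu> a b) (bbar \<kappa> \<mu> a b) z i j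
    = (sc z * c z * D z / \<bar>\<mu>\<bar>) * abar \<kappa> \<mu> a b z $ i $ j"
proof -
  assume z: "z \<in> U"
  have Dz: "D z \<noteq> 0" using D_pos[OF z] by simp
  have e1: "pd (\<lambda>w. bbar \<kappa> \<mu> a b w $ i) j z = 3 * sc z * P j z * b z $ i + sc z * db i j z"
  proof -
    have "pd (\<lambda>w. bbar \<kappa> \<mu> a b w $ i) j z = pd (\<lambda>w. sc w * b w $ i) j z"
      unfolding bb_def[symmetric] bb_eq ..
    also have "\<dots> = pd sc j z * b z $ i + sc z * db i j z"
      unfolding db_def by (rule pd_mult[OF sc_diff[OF z] b_diff[OF z]])
    finally show ?thesis unfolding dsc[OF z] .
  qed
  have e2: "(\<Sum>k\<in>UNIV. christoffel (abar \<kappa> \<mu> a b) k i j z * bbar \<kappa> \<mu> a b z $ k)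
     = sc z * Gbv i j z + sc z * P i z * b z $ j + sc z * P j z * b z $ i"
    unfolding chr_bar[OF z] bb_def[symmetric] bb_eq Gbv_def
    by (simp add: algebra_simps sum.distrib sum_distrib_left if10_mult mult_if10 mult_if0)
  have "covd (abar \<kappa> \<mu> a b) (bbar \<kappa> \<mu> a b) z i j
     = 3 * sc z * P j z * b z $ i + sc z * (Gbv i j z + c z * a z $ i $ j)
        - (sc z * Gbv i j z + sc z * P i z * b z $ j + sc z * P j z * b z $ i)"
    unfolding covd_def e1 e2 db_Gbv[OF z] ..
  also have "\<dots> = (sc z * c z * D z / \<bar>\<mu>\<bar>) * abar \<kappa> \<mu> a b z $ i $ j"
    unfolding ab_def[symmetric] ab_eq P_def using Dz mu_nz
    by (intro alg_cov) auto
  finally show ?thesis .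
qed

lemma factor_pm: "z \<in> U \<Longrightarrow> sc z * c z * D z / \<bar>\<mu>\<bar> = sqrt \<bar>\<mu>\<bar> \<or> sc z * c z * D z / \<bar>\<mu>\<bar> = - sqrt \<bar>\<mu>\<bar>"
proof -
  assume z: "z \<in> U"
  have Dz: "D z > 0" by (rule D_pos[OF z])
  have m: "\<bar>\<mu>\<bar> > 0" using mu_nz by simp
  have cs: "c z = sqrt (D z) \<or> c z = - sqrt (D z)"
  proof -
    have "sqrt (D z) = \<bar>c z\<bar>" unfolding D_c[OF z] by simp
    then show ?thesis by (cases "c z \<ge> 0") auto
  qed
  have sD: "sqrt (D z) * sqrt (D z) = D z" using Dz by simp
  have sm: "sqrt \<bar>\<mu>\<bar> > 0" using m by simp
  have "sc z * sqrt (D z) * D z / \<bar>\<mu>\<bar> = sqrt \<bar>\<mu>\<bar>"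
    unfolding sc_def powr32[OF Dz] powr32[OF m] using Dz m sD
    by (simp add: field_simps)
  then show ?thesis using cs by auto
qed

end



lemma if_mult0: "(if P then y else 0) * x = (if P then y * x else (0::real))"
  by auto

lemma sum_if_const: "(\<Sum>l\<in>A. if P then f l else 0) = (if P then (\<Sum>l\<in>A. f l) else (0::real))"
  by auto

context
  fixes G :: "'n::finite \<Rightarrow> 'n \<Rightarrow> 'n \<Rightarrow> real" and P :: "'n \<Rightarrow> real" and y :: "'n \<Rightarrow> real"
  assumes Gs: "\<And>i j l. G i j l = G i l j"
begin

definition "Gb i j l = G i j l + (if i = l then P j else 0) + (if i = j then P l else 0)"
definition "p0 = (\<Sum>j\<in>UNIV. P j * y j)"
definition "Gy1 i k = (\<Sum>j\<in>UNIV. y j * G i j k)"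
definition "Gy2 i = (\<Sum>j\<in>UNIV. \<Sum>l\<in>UNIV. y j * y l * G i j l)"
definition "PG2 = (\<Sum>j\<in>UNIV. \<Sum>l\<in>UNIV. y j * y l * (\<Sum>m\<in>UNIV. G m j l * P m))"
definition "PGk k = (\<Sum>j\<in>UNIV. y j * (\<Sum>m\<in>UNIV. G m j k * P m))"

lemma inner3: "(\<Sum>m\<in>UNIV. Gb m j l * Gb i m k) = (\<Sum>m\<in>UNIV. G m j l * G i m k)
   + (if i = k then (\<Sum>m\<in>UNIV. G m j l * P m) else 0) + P k * G i j l + P j * Gb i l k + P l * Gb i j k"
  unfolding Gb_def
  by (simp add: distrib_left distrib_right sum.distrib mult_if0 if_mult0 sum_distrib_left)

lemma S3: "(\<Sum>j\<in>UNIV. \<Sum>l\<in>UNIV. y j * y l * (\<Sum>m\<in>UNIV. Gb m j l * Gb i m k))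
  = (\<Sum>j\<in>UNIV. \<Sum>l\<in>UNIV. y j * y l * (\<Sum>m\<in>UNIV. G m j l * G i m k))
    + (if i = k then PG2 + 2 * p0^2 else 0) + P k * Gy2 i + 2 * p0 * Gy1 i k + 2 * p0 * y i * P k"
proof -
  have "(\<Sum>j\<in>UNIV. \<Sum>l\<in>UNIV. y j * y l * (\<Sum>m\<in>UNIV. Gb m j l * Gb i m k))
    = (\<Sum>j\<in>UNIV. \<Sum>l\<in>UNIV. y j * y l * (\<Sum>m\<in>UNIV. G m j l * G i m k))
      + (\<Sum>j\<in>UNIV. \<Sum>l\<in>UNIV. y j * y l * (if i = k then (\<Sum>m\<in>UNIV. G m j l * P m) else 0))
      + (\<Sum>j\<in>UNIV. \<Sum>l\<in>UNIV. y j * y l * (P k * G i j l))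
      + (\<Sum>j\<in>UNIV. \<Sum>l\<in>UNIV. y j * y l * (P j * Gb i l k))
      + (\<Sum>j\<in>UNIV. \<Sum>l\<in>UNIV. y j * y l * (P l * Gb i j k))"
    unfolding inner3 by (simp add: distrib_left sum.distrib)
  also have "(\<Sum>j\<in>UNIV. \<Sum>l\<in>UNIV. y j * y l * (if i = k then (\<Sum>m\<in>UNIV. G m j l * P m) else 0)) = (if i = k then PG2 else 0)"
    unfolding PG2_def by simp
  also have "(\<Sum>j\<in>UNIV. \<Sum>l\<in>UNIV. y j * y l * (P k * G i j l)) = P k * Gy2 i"
    unfolding Gy2_def by (simp add: sum_distrib_left mult_ac)
  also have "(\<Sum>j\<in>UNIV. \<Sum>l\<in>UNIV. y j * y l * (P j * Gb i l k)) = p0 * Gy1 i k + (if i = k then p0^2 else 0) + p0 * y i * P k"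
  proof -
    have e1: "p0 * Gy1 i k = (\<Sum>j\<in>UNIV. \<Sum>l\<in>UNIV. (P j * y j) * (y l * G i l k))"
      unfolding p0_def Gy1_def by (rule sum_product)
    have e2: "p0 * p0 = (\<Sum>j\<in>UNIV. \<Sum>l\<in>UNIV. (P j * y j) * (P l * y l))"
      unfolding p0_def by (rule sum_product)
    show ?thesis unfolding e1 power2_eq_square e2 unfolding Gb_def p0_def
      by (simp add: distrib_left sum.distrib mult_if0 if_mult0 mult_ac sum_distrib_left sum_distrib_right)
  qed
  also have "(\<Sum>j\<in>UNIV. \<Sum>l\<in>UNIV. y j * y l * (P l * Gb i j k)) = (\<Sum>j\<in>UNIV. \<Sum>l\<in>UNIV. y j * y l * (P j * Gb i l k))"
    by (subst sum.swap) (simp add: mult_ac)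
  also have "\<dots> = p0 * Gy1 i k + (if i = k then p0^2 else 0) + p0 * y i * P k"
    by fact
  finally show ?thesis by (simp add: algebra_simps)
qed

lemma inner4: "(\<Sum>m\<in>UNIV. Gb i j m * Gb m k l) = (\<Sum>m\<in>UNIV. G i j m * G m k l)
   + P k * G i j l + P l * G i j k + P j * Gb i k l + (if i = j then (\<Sum>m\<in>UNIV. G m k l * P m) + 2 * P k * P l else 0)"
  unfolding Gb_def
  by (simp add: distrib_left distrib_right sum.distrib mult_if0 if_mult0 sum_distrib_left mult_ac)

lemma S4: "(\<Sum>j\<in>UNIV. \<Sum>l\<in>UNIV. y j * y l * (\<Sum>m\<in>UNIV. Gb i j m * Gb m k l))
  = (\<Sum>j\<in>UNIV. \<Sum>l\<in>UNIV. y j * y l * (\<Sum>m\<in>UNIV. G i j m * G m k l))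
    + P k * Gy2 i + 2 * p0 * Gy1 i k + p0 * y i * P k + (if i = k then p0^2 else 0) + y i * PGk k + 2 * y i * P k * p0"
proof -
  have "(\<Sum>j\<in>UNIV. \<Sum>l\<in>UNIV. y j * y l * (\<Sum>m\<in>UNIV. Gb i j m * Gb m k l))
    = (\<Sum>j\<in>UNIV. \<Sum>l\<in>UNIV. y j * y l * (\<Sum>m\<in>UNIV. G i j m * G m k l))
      + (\<Sum>j\<in>UNIV. \<Sum>l\<in>UNIV. y j * y l * (P k * G i j l))
      + (\<Sum>j\<in>UNIV. \<Sum>l\<in>UNIV. y j * y l * (P l * G i j k))
      + (\<Sum>j\<in>UNIV. \<Sum>l\<in>UNIV. y j * y l * (P j * Gb i k l))
      + (\<Sum>j\<in>UNIV. \<Sum>l\<in>UNIV. y j * y l * (if i = j then (\<Sum>m\<in>UNIV. G m k l * P m) + 2 * P k * P l else 0))"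
    unfolding inner4 by (simp add: distrib_left sum.distrib)
  also have "(\<Sum>j\<in>UNIV. \<Sum>l\<in>UNIV. y j * y l * (P k * G i j l)) = P k * Gy2 i"
    unfolding Gy2_def by (simp add: sum_distrib_left mult_ac)
  also have "(\<Sum>j\<in>UNIV. \<Sum>l\<in>UNIV. y j * y l * (P l * G i j k)) = p0 * Gy1 i k"
  proof -
    have e1: "Gy1 i k * p0 = (\<Sum>j\<in>UNIV. \<Sum>l\<in>UNIV. (y j * G i j k) * (P l * y l))"
      unfolding p0_def Gy1_def by (rule sum_product)
    show ?thesis unfolding mult.commute[of p0] e1 by (simp add: mult_ac)
  qed
  also have "(\<Sum>j\<in>UNIV. \<Sum>l\<in>UNIV. y j * y l * (P j * Gb i k l)) = p0 * Gy1 i k + p0 * y i * P k + (if i = k then p0^2 else 0)"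
  proof -
    have e1: "p0 * Gy1 i k = (\<Sum>j\<in>UNIV. \<Sum>l\<in>UNIV. (P j * y j) * (y l * G i k l))"
      unfolding p0_def Gy1_def Gs[of i _ k] by (rule sum_product)
    have e2: "p0 * p0 = (\<Sum>j\<in>UNIV. \<Sum>l\<in>UNIV. (P j * y j) * (P l * y l))"
      unfolding p0_def by (rule sum_product)
    show ?thesis unfolding e1 power2_eq_square e2 unfolding Gb_def p0_def
      by (simp add: distrib_left sum.distrib mult_if0 if_mult0 mult_ac sum_distrib_left sum_distrib_right)
  qed
  also have "(\<Sum>j\<in>UNIV. \<Sum>l\<in>UNIV. y j * y l * (if i = j then (\<Sum>m\<in>UNIV. G m k l * P m) + 2 * P k * P l else 0))
     = y i * PGk k + 2 * y i * P k * p0"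
    unfolding PGk_def p0_def using Gs
    by (simp add: sum_if_const distrib_left sum.distrib mult_if0 if_mult0 mult_ac sum_distrib_left)
  finally show ?thesis by (simp add: algebra_simps)
qed

definition "dGb dG dP i j l k = dG i j l k + (if i = l then dP j k else 0) + (if i = j then dP l k else (0::real))"

lemma S1: "(\<Sum>j\<in>UNIV. \<Sum>l\<in>UNIV. y j * y l * dGb dG dP i j l k)
   = (\<Sum>j\<in>UNIV. \<Sum>l\<in>UNIV. y j * y l * dG i j l k) + 2 * y i * (\<Sum>j\<in>UNIV. y j * dP j k)"
  unfolding dGb_def
  by (simp add: sum_if_const distrib_left sum.distrib mult_if0 if_mult0 mult_ac sum_distrib_left sum_distrib_right)

lemma S2: "(\<Sum>j\<in>UNIV. \<Sum>l\<in>UNIV. y j * y l * dGb dG dP i k l j)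
   = (\<Sum>j\<in>UNIV. \<Sum>l\<in>UNIV. y j * y l * dG i k l j) + y i * (\<Sum>j\<in>UNIV. y j * dP k j)
     + (if i = k then (\<Sum>j\<in>UNIV. \<Sum>l\<in>UNIV. y j * y l * dP l j) else 0)"
  unfolding dGb_def
  by (simp add: sum_if_const distrib_left sum.distrib mult_if0 if_mult0 mult_ac sum_distrib_left sum_distrib_right)

lemma proj_change:
  fixes dG :: "'n \<Rightarrow> 'n \<Rightarrow> 'n \<Rightarrow> 'n \<Rightarrow> real" and dP al :: "'n \<Rightarrow> 'n \<Rightarrow> real" and \<mu> :: real
  assumes dPeq: "\<And>j k. dP j k = (\<Sum>m\<in>UNIV. G m j k * P m) + \<mu> * al j k + P j * P k"
    and als: "\<And>i j. al i j = al j i"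
  shows "(\<Sum>j\<in>UNIV. \<Sum>l\<in>UNIV. y j * y l * (dGb dG dP i j l k - dGb dG dP i k l j
            + (\<Sum>m\<in>UNIV. Gb m j l * Gb i m k - Gb i j m * Gb m k l)))
       = (\<Sum>j\<in>UNIV. \<Sum>l\<in>UNIV. y j * y l * (dG i j l k - dG i k l j
            + (\<Sum>m\<in>UNIV. G m j l * G i m k - G i j m * G m k l)))
         - \<mu> * ((\<Sum>j\<in>UNIV. \<Sum>l\<in>UNIV. al j l * y j * y l) * (if i = k then 1 else 0) - y i * (\<Sum>m\<in>UNIV. al k m * y m))"
proof -
  define L where "L = (\<Sum>m\<in>UNIV. al k m * y m)"
  define Q where "Q = (\<Sum>j\<in>UNIV. \<Sum>l\<in>UNIV. al j l * y j * y l)"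
  have X1: "(\<Sum>j\<in>UNIV. y j * dP j k) = PGk k + \<mu> * L + p0 * P k"
    unfolding dPeq PGk_def L_def p0_def using als
    by (simp add: distrib_left sum.distrib sum_distrib_left sum_distrib_right mult_ac)
  have X2: "(\<Sum>j\<in>UNIV. y j * dP k j) = PGk k + \<mu> * L + p0 * P k"
    unfolding dPeq PGk_def L_def p0_def using Gs
    by (simp add: distrib_left sum.distrib sum_distrib_left sum_distrib_right mult_ac)
  have Z: "(\<Sum>j\<in>UNIV. \<Sum>l\<in>UNIV. y j * y l * dP l j) = PG2 + \<mu> * Q + p0^2"
  proof -
    have e2: "p0 * p0 = (\<Sum>j\<in>UNIV. \<Sum>l\<in>UNIV. (P j * y j) * (P l * y l))"
      unfolding p0_def by (rule sum_product)
    have q: "(\<Sum>j\<in>UNIV. \<Sum>l\<in>UNIV. y j * y l * al l j) = Q"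
      unfolding Q_def using als by (simp add: mult_ac)
    have g: "(\<Sum>j\<in>UNIV. \<Sum>l\<in>UNIV. y j * y l * (\<Sum>m\<in>UNIV. G m l j * P m)) = PG2"
      unfolding PG2_def using Gs by simp
    show ?thesis unfolding dPeq power2_eq_square e2 q[symmetric] g[symmetric]
      by (simp add: distrib_left sum.distrib sum_distrib_left mult_ac)
  qed
  have split: "\<And>F1 F2 F3 F4 :: 'n \<Rightarrow> 'n \<Rightarrow> real.
     (\<Sum>j\<in>UNIV. \<Sum>l\<in>UNIV. y j * y l * (F1 j l - F2 j l + (F3 j l - F4 j l)))
     = (\<Sum>j\<in>UNIV. \<Sum>l\<in>UNIV. y j * y l * F1 j l) - (\<Sum>j\<in>UNIV. \<Sum>l\<in>UNIV. y j * y l * F2 j l)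
       + (\<Sum>j\<in>UNIV. \<Sum>l\<in>UNIV. y j * y l * F3 j l) - (\<Sum>j\<in>UNIV. \<Sum>l\<in>UNIV. y j * y l * F4 j l)"
    by (simp add: algebra_simps sum.distrib sum_subtractf)
  show ?thesis
    unfolding sum_subtractf split[of "\<lambda>j l. dGb dG dP i j l k" "\<lambda>j l. dGb dG dP i k l j" "\<lambda>j l. \<Sum>m\<in>UNIV. Gb m j l * Gb i m k"
         "\<lambda>j l. \<Sum>m\<in>UNIV. Gb i j m * Gb m k l"]
      split[of "\<lambda>j l. dG i j l k" "\<lambda>j l. dG i k l j" "\<lambda>j l. \<Sum>m\<in>UNIV. G m j l * G i m k"
         "\<lambda>j l. \<Sum>m\<in>UNIV. G i j m * G m k l"]
    unfolding S1 S2 S3 S4 X1 X2 Z L_def[symmetric] Q_def[symmetric]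
    by (simp add: algebra_simps)
qed

end



context L begin

lemma chr_bar_Gb: "z \<in> U \<Longrightarrow> christoffel (abar \<kappa> \<mu> a b) i j l z = Gb (\<lambda>i j l. G i j l z) (\<lambda>j. P j z) i j l"
proof -
  assume z: "z \<in> U"
  have Gs: "\<And>i j l. G i j l z = G i l j z" using G_sym[OF z] by blast
  show ?thesis unfolding chr_bar[OF z] Gb_def[OF Gs] by (simp add: mult_if10)
qed

lemma dchr_bar: "z \<in> U \<Longrightarrow> pd (\<lambda>w. christoffel (abar \<kappa> \<mu> a b) i j l w) k z
   = dGb (\<lambda>i j l k. pd (\<lambda>w. G i j l w) k z) (\<lambda>j k. pd (P j) k z) i j l k"
proof -
  assume z: "z \<in> U"
  have "pd (\<lambda>w. christoffel (abar \<kappa> \<mu> a b) i j l w) k z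
      = pd (\<lambda>w. G i j l w + (if i = l then P j w else 0) + (if i = j then P l w else 0)) k z"
    by (rule pd_cong[OF U_open z]) (simp add: chr_bar mult_if10)
  also have "\<dots> = pd (\<lambda>w. G i j l w) k z + (if i = l then pd (P j) k z else 0) + (if i = j then pd (P l) k z else 0)"
  proof -
    have d1: "(\<lambda>w. if i = l then P j w else 0) differentiable (at z)" by (cases "i = l") (auto intro: P_diff z)
    have d2: "(\<lambda>w. if i = j then P l w else 0) differentiable (at z)" by (cases "i = j") (auto intro: P_diff z)
    have p1: "pd (\<lambda>w. if i = l then P j w else 0) k z = (if i = l then pd (P j) k z else 0)"
      by (cases "i = l") (simp_all add: pd_const)
    have p2: "pd (\<lambda>w. if i = j then P l w else 0) k z = (if i = j then pd (P l) k z else 0)"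
      by (cases "i = j") (simp_all add: pd_const)
    have "pd (\<lambda>w. G i j l w + (if i = l then P j w else 0) + (if i = j then P l w else 0)) k z
       = pd (\<lambda>w. G i j l w + (if i = l then P j w else 0)) k z + pd (\<lambda>w. if i = j then P l w else 0) k z"
      by (rule pd_add[OF differentiable_add[OF G_diff[OF z] d1] d2])
    also have "pd (\<lambda>w. G i j l w + (if i = l then P j w else 0)) k z = pd (\<lambda>w. G i j l w) k z + pd (\<lambda>w. if i = l then P j w else 0) k z"
      by (rule pd_add[OF G_diff[OF z] d1])
    finally show ?thesis unfolding p1 p2 .
  qed
  moreover have Gs: "\<And>i j l. G i j l z = G i l j z" using G_sym[OF z] by blast
  ultimately show ?thesis unfolding dGb_def[OF Gs] by simp
qed

lemma part1: "z \<in> U \<Longrightarrow> riem (abar \<kappa> \<mu> a b) z y = 0"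
proof -
  assume z: "z \<in> U"
  have Gs: "\<And>i j l. G i j l z = G i l j z" using G_sym[OF z] by blast
  show ?thesis
  proof (subst vec_eq_iff, intro allI, subst vec_eq_iff, intro allI)
    fix i k
    have "riem (abar \<kappa> \<mu> a b) z y $ i $ k =
       riem a z y $ i $ k - \<mu> * ((\<Sum>j\<in>UNIV. \<Sum>l\<in>UNIV. a z $ j $ l * y $ j * y $ l) * (if i = k then 1 else 0) - y $ i * (\<Sum>m\<in>UNIV. a z $ k $ m * y $ m))"
      unfolding riem_def chr_bar_Gb[OF z] dchr_bar[OF z] vec_lambda_beta G_def[symmetric]
      by (rule proj_change[OF Gs dP[OF z]]) (rule asym[OF z])
    also have "\<dots> = 0"
      using curv z unfolding quadf_def lower_def by (simp add: mult_ac)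
    finally show "riem (abar \<kappa> \<mu> a b) z y $ i $ k = 0 $ i $ k" by simp
  qed
qed

end

theorem lemma3p3:
  fixes U :: "(real^'n) set"
    and a :: "real^'n \<Rightarrow> real^'n^'n"
    and b :: "real^'n \<Rightarrow> real^'n"
    and c :: "real^'n \<Rightarrow> real"
    and \<kappa> \<mu> :: real
  assumes U_open: "open U"
    and a_smooth: "\<forall>i j. smooth_fun_on U (\<lambda>x. a x $ i $ j)"
    and a_sym: "\<forall>x\<in>U. transpose (a x) = a x"
    and a_posdef: "\<forall>x\<in>U. \<forall>y. y \<noteq> 0 \<longrightarrow> quadf a x y > 0"
    and b_smooth: "\<forall>i. smooth_fun_on U (\<lambda>x. b x $ i)"
    and curv: "\<forall>x\<in>U. \<forall>y. \<forall>i j. riem a x y $ i $ j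
                 = \<mu> * (quadf a x y * (if i = j then 1 else 0) - y $ i * lower a x y j)"
    and closed: "\<forall>x\<in>U. \<forall>i j. covd a b x i j = c x * a x $ i $ j"
    and c_sq: "\<forall>x\<in>U. (c x)\<^sup>2 = \<kappa> - \<mu> * bnorm2 a b x"
    and kappa_nz: "\<kappa> \<noteq> 0"
    and mu_nz: "\<mu> \<noteq> 0"
    and pos: "\<forall>x\<in>U. \<kappa> - \<mu> * bnorm2 a b x > 0"
  shows "(\<forall>x\<in>U. \<forall>y. riem (abar \<kappa> \<mu> a b) x y = 0)
    \<and> (\<forall>x\<in>U. (\<forall>i j. covd (abar \<kappa> \<mu> a b) (bbar \<kappa> \<mu> a b) x i j
                        = sqrt \<bar>\<mu>\<bar> * abar \<kappa> \<mu> a b x $ i $ j)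
             \<or> (\<forall>i j. covd (abar \<kappa> \<mu> a b) (bbar \<kappa> \<mu> a b) x i j
                        = - sqrt \<bar>\<mu>\<bar> * abar \<kappa> \<mu> a b x $ i $ j))
    \<and> (\<forall>x\<in>U. (\<kappa> - \<mu> * bnorm2 a b x)
               * (1/\<kappa> + (1/\<mu>) * bnorm2 (abar \<kappa> \<mu> a b) (bbar \<kappa> \<mu> a b) x) = 1)
    \<and> (\<forall>x\<in>U. \<forall>y.
         (let E = 1/\<kappa> + (1/\<mu>) * bnorm2 (abar \<kappa> \<mu> a b) (bbar \<kappa> \<mu> a b) x in
           quadf a x y = ((1/\<bar>\<mu>\<bar>) / E) *
               (quadf (abar \<kappa> \<mu> a b) x y - ((1/\<mu>) / E) * (oneform (bbar \<kappa> \<mu> a b) x y)\<^sup>2)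
         \<and> oneform b x y = (\<bar>\<mu>\<bar> powr (-3/2) / E powr (3/2)) * oneform (bbar \<kappa> \<mu> a b) x y))"
proof -
  interpret L U a b c \<kappa> \<mu>
    using assms by unfold_locales auto
  show ?thesis
  proof (intro conjI ballI allI)
    fix x y assume "x \<in> U"
    then show "riem (abar \<kappa> \<mu> a b) x y = 0" by (rule part1)
  next
    fix x assume x: "x \<in> U"
    show "(\<forall>i j. covd (abar \<kappa> \<mu> a b) (bbar \<kappa> \<mu> a b) x i j = sqrt \<bar>\<mu>\<bar> * abar \<kappa> \<mu> a b x $ i $ j)
        \<or> (\<forall>i j. covd (abar \<kappa> \<mu> a b) (bbar \<kappa> \<mu> a b) x i j = - sqrt \<bar>\<mu>\<bar> * abar \<kappa> \<mu> a b x $ i $ j)"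
    proof (cases "sc x * c x * D x / \<bar>\<mu>\<bar> = sqrt \<bar>\<mu>\<bar>")
      case True
      then show ?thesis using covd_bar[OF x] by simp
    next
      case False
      then have "sc x * c x * D x / \<bar>\<mu>\<bar> = - sqrt \<bar>\<mu>\<bar>" using factor_pm[OF x] by blast
      then show ?thesis using covd_bar[OF x] by simp
    qed
  next
    fix x assume x: "x \<in> U"
    show "(\<kappa> - \<mu> * bnorm2 a b x) * (1/\<kappa> + (1/\<mu>) * bnorm2 (abar \<kappa> \<mu> a b) (bbar \<kappa> \<mu> a b) x) = 1"
      by (rule part3[OF x])
  next
    fix x y assume x: "x \<in> U"
    show "let E = 1/\<kappa> + (1/\<mu>) * bnorm2 (abar \<kappa> \<mu> a b) (bbar \<kappa> \<mu> a b) x in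
           quadf a x y = ((1/\<bar>\<mu>\<bar>) / E) *
               (quadf (abar \<kappa> \<mu> a b) x y - ((1/\<mu>) / E) * (oneform (bbar \<kappa> \<mu> a b) x y)\<^sup>2)
         \<and> oneform b x y = (\<bar>\<mu>\<bar> powr (-3/2) / E powr (3/2)) * oneform (bbar \<kappa> \<mu> a b) x y"
      by (rule part4[OF x])
  qed
qed

end
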